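(* Let $I\ge0$, $\beta>0$, and let $\psi=(\psi_0,\dots,\psi_I)$ be a vector of continuous functions $[0,\beta]\to[0,1]$. Then $\psi$ is a valid cumulative occupancy path if and only if, for each $0\le i\le I$ and $0\le x<y\le\beta$: (a) $\psi_i(x)\ge\psi_{i-1}(x)$; (b) $\psi_i(x)\ge\psi_i(y)$; (c) $\sum_{k=0}^I(\psi_k(x)-\psi_k(y))\le y-x$. (Here $\psi_{-1}\equiv0$.)
   Context: $S_I=\{\gamma\in\mathbb{R}^{I+2}:\gamma_j\ge0,\sum_{j=0}^{I+1}\gamma_j=1\}$, components indexed $0,\dots,I,I+$. An occupancy function $\gamma:[0,\beta]\to\mathbb{R}^{I+2}$ is valid if it is absolutely continuous, $\gamma(x)\in S_I$ for all $x$, and its rate $\theta$, defined by $\dot\gamma_0=-\theta_0$, $\dot\gamma_j=\theta_{j-1}-\theta_j$ ($1\le j\le I$), $\dot\gamma_{I+}=\theta_I$ and $\sum_{j}\theta_j=1$, lies in $S_I$ for a.e. $x$. Its cumulative occupancy function is $\psi_i(x)=\sum_{j=0}^i\gamma_j(x)$, $i=0,\dots,I$ (with $\gamma_{I+}=1-\psi_I$). $\psi$ is a valid cumulative occupancy path if it is the cumulative occupancy function of a valid occupancy function. *)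

theory Defs
  imports "HOL-Analysis.Analysis"
begin

text \<open>Vectors in R^(I+2) are represented as functions nat => real, components
  0..I+1, where component I+1 plays the role of the index I+.\<close>

definition in_simplex :: "nat \<Rightarrow> (nat \<Rightarrow> real) \<Rightarrow> bool" where
  "in_simplex I v \<longleftrightarrow> (\<forall>j\<le>I+1. 0 \<le> v j) \<and> (\<Sum>j\<le>I+1. v j) = 1"

definition abs_continuous_on :: "real \<Rightarrow> real \<Rightarrow> (real \<Rightarrow> real) \<Rightarrow> bool" where
  "abs_continuous_on a b f \<longleftrightarrow>
     (\<forall>\<epsilon>>0. \<exists>\<delta>>0. \<forall>(n::nat) (u::nat \<Rightarrow> real) (v::nat \<Rightarrow> real).
        (\<forall>k<n. a \<le> u k \<and> u k \<le> v k \<and> v k \<le> b) \<and>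
        (\<forall>k<n. \<forall>l<n. k \<noteq> l \<longrightarrow> v k \<le> u l \<or> v l \<le> u k) \<and>
        (\<Sum>k<n. v k - u k) < \<delta>
        \<longrightarrow> (\<Sum>k<n. \<bar>f (v k) - f (u k)\<bar>) < \<epsilon>)"

definition valid_occupancy :: "nat \<Rightarrow> real \<Rightarrow> (nat \<Rightarrow> real \<Rightarrow> real) \<Rightarrow> bool" where
  "valid_occupancy I \<beta> \<gamma> \<longleftrightarrow>
     (\<forall>j\<le>I+1. abs_continuous_on 0 \<beta> (\<gamma> j)) \<and>
     (\<forall>x\<in>{0..\<beta>}. in_simplex I (\<lambda>j. \<gamma> j x)) \<and>
     (\<exists>\<theta> :: nat \<Rightarrow> real \<Rightarrow> real.
        AE x in lborel. x \<in> {0..\<beta>} \<longrightarrow>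
          (\<gamma> 0 has_real_derivative - \<theta> 0 x) (at x within {0..\<beta>}) \<and>
          (\<forall>j\<in>{1..I}. (\<gamma> j has_real_derivative \<theta> (j-1) x - \<theta> j x) (at x within {0..\<beta>})) \<and>
          (\<gamma> (I+1) has_real_derivative \<theta> I x) (at x within {0..\<beta>}) \<and>
          in_simplex I (\<lambda>j. \<theta> j x))"

definition cumulative_occupancy :: "(nat \<Rightarrow> real \<Rightarrow> real) \<Rightarrow> nat \<Rightarrow> real \<Rightarrow> real" where
  "cumulative_occupancy \<gamma> i x = (\<Sum>j\<le>i. \<gamma> j x)"

definition valid_cumulative_path :: "nat \<Rightarrow> real \<Rightarrow> (nat \<Rightarrow> real \<Rightarrow> real) \<Rightarrow> bool" where
  "valid_cumulative_path I \<beta> \<psi> \<longleftrightarrow>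
     (\<exists>\<gamma>. valid_occupancy I \<beta> \<gamma> \<and>
        (\<forall>i\<le>I. \<forall>x\<in>{0..\<beta>}. \<psi> i x = cumulative_occupancy \<gamma> i x))"

end

theory Submission
  imports Defs
begin

lemma tele_sum:
  fixes f :: "real \<Rightarrow> real" and l u :: "'i \<Rightarrow> real"
  assumes "mono f"
  shows "finite F \<Longrightarrow> a \<le> b \<Longrightarrow> (\<forall>j\<in>F. a \<le> l j \<and> l j \<le> u j \<and> u j \<le> b) \<Longrightarrow>
    (\<forall>i\<in>F. \<forall>j\<in>F. i \<noteq> j \<longrightarrow> u i < l j \<or> u j < l i) \<Longrightarrow>
    (\<Sum>j\<in>F. f (u j) - f (l j)) \<le> f b - f a"
proof (induction "card F" arbitrary: F b rule: less_induct)
  case less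
  show ?case
  proof (cases "F = {}")
    case True
    then show ?thesis using less.prems assms by (simp add: monoD)
  next
    case False
    have "Max (l ` F) \<in> l ` F" using False less.prems(1) by simp
    then obtain j0 where "j0 \<in> F" "l j0 = Max (l ` F)" by auto
    then have j0: "j0 \<in> F" "\<forall>j\<in>F. l j \<le> l j0" using less.prems(1) by auto
    let ?F = "F - {j0}"
    have c: "card ?F < card F" using j0 less.prems(1) by (intro card_Diff1_less)
    have sub: "\<forall>j\<in>?F. a \<le> l j \<and> l j \<le> u j \<and> u j \<le> l j0"
    proof
      fix j assume "j \<in> ?F"
      then have "j \<in> F" "j \<noteq> j0" by auto
      then have "u j < l j0 \<or> u j0 < l j" using less.prems(4) j0 by blast
      moreover have "l j \<le> l j0" "l j0 \<le> u j0" using j0 \<open>j \<in> F\<close> less.prems(3) by auto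
      ultimately show "a \<le> l j \<and> l j \<le> u j \<and> u j \<le> l j0" using less.prems(3) \<open>j \<in> F\<close> by force
    qed
    have IH: "(\<Sum>j\<in>?F. f (u j) - f (l j)) \<le> f (l j0) - f a"
      apply (rule less.hyps[OF c])
      using less.prems j0 sub by auto
    have "f (u j0) \<le> f b" using less.prems(3) j0 assms by (simp add: monoD)
    moreover have "(\<Sum>j\<in>F. f (u j) - f (l j)) = f (u j0) - f (l j0) + (\<Sum>j\<in>?F. f (u j) - f (l j))"
      using j0 less.prems(1) by (simp add: sum.remove)
    ultimately show ?thesis using IH by linarith
  qed
qed


lemma neg_countable: "countable (A::real set) \<Longrightarrow> negligible A"
  unfolding negligible_iff_null_sets
  by (metis countable_imp_null_set_lborel null_sets_completionI)

lemma cb: "cball ((l+u)/2) ((u-l)/2) = {l..(u::real)}" by (auto simp: cball_eq_atLeastAtMost field_simps)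
lemma bb: "ball ((l+u)/2) ((u-l)/2) = {l<..<(u::real)}" by (auto simp: ball_eq_greaterThanLessThan field_simps)

lemma disjnt_Icc: "(a::real) \<le> b \<Longrightarrow> c \<le> d \<Longrightarrow> disjnt {a..b} {c..d} \<Longrightarrow> b < c \<or> d < a"
  unfolding disjnt_def
  by (metis (no_types, lifting) atLeastAtMost_iff disjoint_iff linorder_not_le max.bounded_iff max.cobounded1 max.cobounded2)

lemma neg_open_small:
  assumes "negligible N" "0 < e"
  obtains T where "open T" "N \<subseteq> T" "T \<in> lmeasurable" "measure lebesgue T < e"
proof -
  obtain T where T: "open T" "N \<subseteq> T" "T - N \<in> lmeasurable" "emeasure lebesgue (T - N) < ennreal e"
    using sets_lebesgue_outer_open[OF negligible_imp_sets[OF assms(1)] assms(2)] by blast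
  have m: "measure lebesgue (T - N) < e"
    using T(3,4) by (simp add: emeasure_eq_measure2 ennreal_less_iff)
  have Nm: "N \<in> lmeasurable" "measure lebesgue N = 0"
    using assms(1) negligible_iff_measure by blast+
  have TT: "T = (T - N) \<union> N" using T(2) by blast
  have "T \<in> lmeasurable" using T(3) Nm by (subst TT) (rule fmeasurable.Un)
  moreover have "measure lebesgue T \<le> measure lebesgue (T - N) + measure lebesgue N"
    using T(3) Nm by (subst TT) (intro measure_Un_le; auto)
  ultimately show ?thesis using that T m Nm by force
qed

definition LS :: "(real \<Rightarrow> real) \<Rightarrow> real \<Rightarrow> real \<Rightarrow> bool" where
  "LS f x p \<longleftrightarrow> (\<forall>d>0. \<exists>y. x - d < y \<and> y < x \<and> f x - f y < p * (x - y))"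
definition RB :: "(real \<Rightarrow> real) \<Rightarrow> real \<Rightarrow> real \<Rightarrow> bool" where
  "RB f x q \<longleftrightarrow> (\<forall>d>0. \<exists>y. x < y \<and> y < x + d \<and> q * (y - x) < f y - f x)"

lemma core_step:
  fixes f :: "real \<Rightarrow> real"
  assumes mono: "mono f" and pq: "0 < p" "p < q"
    and EU: "E \<subseteq> U" "open U" "U \<in> lmeasurable"
    and E: "\<forall>x\<in>E. LS f x p \<and> RB f x q" and eta: "\<eta> > 0"
  shows "\<exists>V. open V \<and> E \<subseteq> V \<and> V \<in> lmeasurable \<and> measure lebesgue V \<le> p/q * measure lebesgue U + \<eta>"
proof -
  define mid :: "real \<times> real \<Rightarrow> real" where "mid i = (fst i + snd i)/2" for i
  define rad :: "real \<times> real \<Rightarrow> real" where "rad i = (snd i - fst i)/2" for i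
  have cbi: "cball (mid i) (rad i) = {fst i..snd i}" for i unfolding mid_def rad_def by (rule cb)
  have bi: "ball (mid i) (rad i) = {fst i<..<snd i}" for i unfolding mid_def rad_def by (rule bb)
  define K1 where "K1 = {i. fst i < snd i \<and> {fst i..snd i} \<subseteq> U \<and> f (snd i) - f (fst i) < p * (snd i - fst i)}"
  obtain C1 where C1: "countable C1" "C1 \<subseteq> K1"
     "pairwise (\<lambda>i j. disjnt (cball (mid i) (rad i)) (cball (mid j) (rad j))) C1"
     "negligible (E - (\<Union>i \<in> C1. cball (mid i) (rad i)))"
  proof (rule Vitali_covering_theorem_cballs[of K1 rad E mid])
    fix i assume "i \<in> K1" then show "0 < rad i" by (auto simp: K1_def rad_def)
  next
    fix x d :: real assume xd: "x \<in> E" "0 < d"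
    then obtain \<rho> where \<rho>: "\<rho> > 0" "ball x \<rho> \<subseteq> U" using EU openE by blast
    have "min d \<rho> > 0" using \<rho> xd by simp
    then obtain y where y: "x - min d \<rho> < y" "y < x" "f x - f y < p * (x - y)"
      using E xd unfolding LS_def by blast
    show "\<exists>i. i \<in> K1 \<and> x \<in> cball (mid i) (rad i) \<and> rad i < d"
    proof (intro exI conjI)
      have "{y..x} \<subseteq> ball x \<rho>" using y by (auto simp: dist_real_def)
      then show "(y, x) \<in> K1" using y \<rho> by (auto simp: K1_def)
      show "x \<in> cball (mid (y, x)) (rad (y, x))" unfolding cbi using y by simp
      show "rad (y, x) < d" using y xd by (simp add: rad_def)
    qed
  qed
  have C1d: "snd i < fst j \<or> snd j < fst i" if "i \<in> C1" "j \<in> C1" "i \<noteq> j" for i j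
    using C1(2,3) that unfolding pairwise_def cbi K1_def
    by (intro disjnt_Icc) auto
  define A where "A = E \<inter> (\<Union>i\<in>C1. {fst i<..<snd i})"
  define K2 where "K2 = {j. fst j < snd j \<and> (\<exists>i\<in>C1. {fst j..snd j} \<subseteq> {fst i<..<snd i}) \<and> q * (snd j - fst j) < f (snd j) - f (fst j)}"
  obtain C2 where C2: "countable C2" "C2 \<subseteq> K2"
     "pairwise (\<lambda>i j. disjnt (cball (mid i) (rad i)) (cball (mid j) (rad j))) C2"
     "negligible (A - (\<Union>i \<in> C2. cball (mid i) (rad i)))"
  proof (rule Vitali_covering_theorem_cballs[of K2 rad A mid])
    fix i assume "i \<in> K2" then show "0 < rad i" by (auto simp: K2_def rad_def)
  next
    fix x d :: real assume xd: "x \<in> A" "0 < d"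
    then obtain i where i: "i \<in> C1" "fst i < x" "x < snd i" "x \<in> E" unfolding A_def by auto
    have "min d (snd i - x) > 0" using i xd by simp
    then obtain y where y: "x < y" "y < x + min d (snd i - x)" "q * (y - x) < f y - f x"
      using E i unfolding RB_def by blast
    show "\<exists>j. j \<in> K2 \<and> x \<in> cball (mid j) (rad j) \<and> rad j < d"
    proof (intro exI conjI)
      have "{x..y} \<subseteq> {fst i<..<snd i}" using y i by auto
      then show "(x, y) \<in> K2" using y i by (auto simp: K2_def)
      show "x \<in> cball (mid (x, y)) (rad (x, y))" unfolding cbi using y by simp
      show "rad (x, y) < d" using y xd by (simp add: rad_def)
    qed
  qed
  have C2d: "snd i < fst j \<or> snd j < fst i" if "i \<in> C2" "j \<in> C2" "i \<noteq> j" for i j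
    using C2(2,3) that unfolding pairwise_def cbi K2_def
    by (intro disjnt_Icc) auto
  obtain P where P: "\<forall>j\<in>C2. P j \<in> C1 \<and> {fst j..snd j} \<subseteq> {fst (P j)<..<snd (P j)}"
  proof -
    have "\<forall>j\<in>C2. \<exists>i. i \<in> C1 \<and> {fst j..snd j} \<subseteq> {fst i<..<snd i}"
      using C2(2) unfolding K2_def by blast
    then show ?thesis using that by metis
  qed
  define B where "B = (\<Union>j\<in>C2. {fst j<..<snd j})"
  define N where "N = E - B"
  have Nsub: "N \<subseteq> (E - (\<Union>i \<in> C1. cball (mid i) (rad i))) \<union> (\<Union>i\<in>C1. {fst i, snd i})
      \<union> (A - (\<Union>i \<in> C2. cball (mid i) (rad i))) \<union> (\<Union>i\<in>C2. {fst i, snd i})"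
  proof
    fix x assume x: "x \<in> N"
    then have xE: "x \<in> E" and xB: "\<forall>j\<in>C2. x \<notin> {fst j<..<snd j}" unfolding N_def B_def by auto
    show "x \<in> (E - (\<Union>i \<in> C1. cball (mid i) (rad i))) \<union> (\<Union>i\<in>C1. {fst i, snd i})
      \<union> (A - (\<Union>i \<in> C2. cball (mid i) (rad i))) \<union> (\<Union>i\<in>C2. {fst i, snd i})"
    proof (cases "\<exists>i\<in>C1. x \<in> {fst i..snd i}")
      case False then show ?thesis using xE unfolding cbi by blast
    next
      case True
      then obtain i where i: "i \<in> C1" "x \<in> {fst i..snd i}" by blast
      show ?thesis
      proof (cases "x = fst i \<or> x = snd i")
        case True then show ?thesis using i by blast
      next
        case False
        then have xA: "x \<in> A" using i xE unfolding A_def by force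
        show ?thesis
        proof (cases "\<exists>j\<in>C2. x \<in> {fst j..snd j}")
          case False then show ?thesis using xA unfolding cbi by blast
        next
          case True
          then obtain j where j: "j \<in> C2" "x \<in> {fst j..snd j}" by blast
          then have "x = fst j \<or> x = snd j" using xB by force
          then show ?thesis using j by blast
        qed
      qed
    qed
  qed
  have "negligible N"
  proof (rule negligible_subset[OF _ Nsub], intro negligible_Un)
    show "negligible (E - (\<Union>i \<in> C1. cball (mid i) (rad i)))" by (rule C1(4))
    show "negligible (A - (\<Union>i \<in> C2. cball (mid i) (rad i)))" by (rule C2(4))
    show "negligible (\<Union>i\<in>C1. {fst i, snd i})" using C1(1) by (intro neg_countable) auto
    show "negligible (\<Union>i\<in>C2. {fst i, snd i})" using C2(1) by (intro neg_countable) auto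
  qed
  then obtain T where T: "open T" "N \<subseteq> T" "T \<in> lmeasurable" "measure lebesgue T < \<eta>"
    using neg_open_small eta by blast
  have fin_bound: "measure lebesgue (\<Union>j\<in>G. {fst j<..<snd j}) \<le> p/q * measure lebesgue U"
    if G: "G \<subseteq> C2" "finite G" for G
  proof -
    have Gk: "fst j < snd j" "q * (snd j - fst j) < f (snd j) - f (fst j)" if "j \<in> G" for j
      using that G C2(2) by (auto simp: K2_def)
    have "measure lebesgue (\<Union>j\<in>G. {fst j<..<snd j}) \<le> (\<Sum>j\<in>G. measure lebesgue {fst j<..<snd j})"
      using G by (intro measure_UNION_le) auto
    also have "\<dots> = (\<Sum>j\<in>G. snd j - fst j)"
    proof (rule sum.cong)
      fix j assume "j \<in> G"
      then have "fst j < snd j" by (rule Gk)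
      then show "measure lebesgue {fst j<..<snd j} = snd j - fst j" by simp
    qed simp
    also have "\<dots> \<le> (\<Sum>j\<in>G. (f (snd j) - f (fst j)) / q)"
    proof (rule sum_mono)
      fix j assume "j \<in> G"
      then have "q * (snd j - fst j) < f (snd j) - f (fst j)" by (rule Gk(2))
      then show "snd j - fst j \<le> (f (snd j) - f (fst j)) / q" using pq by (simp add: field_simps)
    qed
    also have "\<dots> = (\<Sum>j\<in>G. f (snd j) - f (fst j)) / q"
      by (simp add: sum_divide_distrib)
    finally have m1: "measure lebesgue (\<Union>j\<in>G. {fst j<..<snd j}) \<le> (\<Sum>j\<in>G. f (snd j) - f (fst j)) / q" .
    have "(\<Sum>j\<in>G. f (snd j) - f (fst j)) = (\<Sum>i\<in>P ` G. \<Sum>j\<in>{j\<in>G. P j = i}. f (snd j) - f (fst j))"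
      by (rule sum.image_gen[OF G(2)])
    also have "\<dots> \<le> (\<Sum>i\<in>P ` G. f (snd i) - f (fst i))"
    proof (rule sum_mono)
      fix i assume i: "i \<in> P ` G"
      then have iC1: "i \<in> C1" using P G by auto
      then have "fst i < snd i" using C1(2) by (auto simp: K1_def)
      show "(\<Sum>j\<in>{j\<in>G. P j = i}. f (snd j) - f (fst j)) \<le> f (snd i) - f (fst i)"
      proof (rule tele_sum[OF mono])
        show "finite {j\<in>G. P j = i}" using G by simp
        show "fst i \<le> snd i" using \<open>fst i < snd i\<close> by simp
        show "\<forall>j\<in>{j\<in>G. P j = i}. fst i \<le> fst j \<and> fst j \<le> snd j \<and> snd j \<le> snd i"
        proof
          fix j assume j: "j \<in> {j\<in>G. P j = i}"
          then have sub: "{fst j..snd j} \<subseteq> {fst i<..<snd i}" and "fst j < snd j" using P G Gk by auto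
          then have "fst j \<in> {fst j..snd j}" "snd j \<in> {fst j..snd j}" by auto
          then have "fst j \<in> {fst i<..<snd i}" "snd j \<in> {fst i<..<snd i}" using sub by blast+
          then show "fst i \<le> fst j \<and> fst j \<le> snd j \<and> snd j \<le> snd i" using \<open>fst j < snd j\<close> by auto
        qed
        show "\<forall>ja\<in>{j\<in>G. P j = i}. \<forall>j\<in>{j\<in>G. P j = i}. ja \<noteq> j \<longrightarrow> snd ja < fst j \<or> snd j < fst ja"
          using C2d G by blast
      qed
    qed
    also have "\<dots> \<le> (\<Sum>i\<in>P ` G. p * (snd i - fst i))"
    proof (rule sum_mono)
      fix i assume "i \<in> P ` G"
      then have "i \<in> C1" using P G by auto
      then show "f (snd i) - f (fst i) \<le> p * (snd i - fst i)" using C1(2) by (auto simp: K1_def)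
    qed
    also have "\<dots> = p * (\<Sum>i\<in>P ` G. measure lebesgue {fst i..snd i})"
      unfolding sum_distrib_left
    proof (rule sum.cong)
      fix i assume "i \<in> P ` G"
      then have "i \<in> C1" using P G by auto
      then have "fst i < snd i" using C1(2) by (auto simp: K1_def)
      then show "p * (snd i - fst i) = p * measure lebesgue {fst i..snd i}" by simp
    qed simp
    also have "\<dots> = p * measure lebesgue (\<Union>i\<in>P ` G. {fst i..snd i})"
      apply (rule arg_cong[where f="\<lambda>t. p * t"])
    proof (rule measure_UNION'[symmetric])
      show "finite (P ` G)" using G by simp
      show "\<And>i. i \<in> P ` G \<Longrightarrow> {fst i..snd i} \<in> lmeasurable" by simp
      show "pairwise (\<lambda>i j. disjnt {fst i..snd i} {fst j..snd j}) (P ` G)"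
        using C1(3) P G unfolding cbi by (elim pairwise_subset) auto
    qed
    also have "\<dots> \<le> p * measure lebesgue U"
      apply (rule mult_left_mono[OF _ less_imp_le[OF pq(1)]])
    proof (rule measure_mono_fmeasurable)
      have "\<And>i. i \<in> P ` G \<Longrightarrow> {fst i..snd i} \<subseteq> U"
      proof -
        fix i assume "i \<in> P ` G"
        then have "i \<in> C1" using P G by auto
        then show "{fst i..snd i} \<subseteq> U" using C1(2) unfolding K1_def by blast
      qed
      then show "(\<Union>i\<in>P ` G. {fst i..snd i}) \<subseteq> U" by blast
      show "(\<Union>i\<in>P ` G. {fst i..snd i}) \<in> sets lebesgue" using G by (intro sets.finite_UN) auto
    qed (rule EU(3))
    finally have m2: "(\<Sum>j\<in>G. f (snd j) - f (fst j)) \<le> p * measure lebesgue U" .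
    have "(\<Sum>j\<in>G. f (snd j) - f (fst j)) / q \<le> p * measure lebesgue U / q"
      using m2 pq by (intro divide_right_mono) auto
    then show ?thesis using m1 by simp
  qed
  have Bm: "B \<in> lmeasurable" "measure lebesgue B \<le> p/q * measure lebesgue U"
    unfolding B_def
    by (rule fmeasurable_UN_bound[OF C2(1)], simp, rule fin_bound, assumption+)
       (rule measure_UN_bound[OF C2(1)], simp, rule fin_bound, assumption+)
  show ?thesis
  proof (intro exI conjI)
    show "open (B \<union> T)" unfolding B_def using T(1) by (intro open_Un open_UN) auto
    show "E \<subseteq> B \<union> T" using T(2) unfolding N_def by blast
    show "B \<union> T \<in> lmeasurable" using Bm T by (intro fmeasurable.Un)
    have "measure lebesgue (B \<union> T) \<le> measure lebesgue B + measure lebesgue T"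
      using Bm T by (intro measure_Un_le) auto
    then show "measure lebesgue (B \<union> T) \<le> p/q * measure lebesgue U + \<eta>" using Bm T by linarith
  qed
qed


lemma core_negl:
  fixes f :: "real \<Rightarrow> real"
  assumes mono: "mono f" and pq: "p < q"
  shows "negligible {x \<in> {a<..<b}. LS f x p \<and> RB f x q}"
proof (cases "p \<le> 0")
  case True
  have "{x \<in> {a<..<b}. LS f x p \<and> RB f x q} = {}"
  proof (rule ccontr)
    assume "{x \<in> {a<..<b}. LS f x p \<and> RB f x q} \<noteq> {}"
    then obtain x where "LS f x p" by blast
    then obtain y where y: "y < x" "f x - f y < p * (x - y)" unfolding LS_def
      by (metis less_add_one)
    have "f y \<le> f x" using mono y(1) by (simp add: monoD)
    moreover have "p * (x - y) \<le> 0" using True y(1) by (simp add: mult_nonpos_nonneg)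
    ultimately show False using y(2) by linarith
  qed
  then show ?thesis by (metis negligible_empty)
next
  case False
  then have p0: "0 < p" by simp
  define E where "E = {x \<in> {a<..<b}. LS f x p \<and> RB f x q}"
  define \<rho> where "\<rho> = p / q"
  define M where "M = measure lebesgue {a<..<b}"
  have \<rho>: "0 < \<rho>" "\<rho> < 1" using p0 pq by (auto simp: \<rho>_def)
  have M0: "0 \<le> M" by (simp add: M_def)
  have EP: "\<forall>x\<in>E. LS f x p \<and> RB f x q" by (auto simp: E_def)
  have iter: "\<exists>V. open V \<and> E \<subseteq> V \<and> V \<in> lmeasurable \<and> measure lebesgue V \<le> \<rho>^n * M + real n * \<eta>"
    if eta: "\<eta> > 0" for \<eta> :: real and n :: nat
  proof (induction n)
    case 0
    show ?case by (rule exI[of _ "{a<..<b}"]) (auto simp: E_def M_def)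
  next
    case (Suc n)
    then obtain V where V: "open V" "E \<subseteq> V" "V \<in> lmeasurable" "measure lebesgue V \<le> \<rho>^n * M + real n * \<eta>"
      by blast
    obtain V' where V': "open V'" "E \<subseteq> V'" "V' \<in> lmeasurable" "measure lebesgue V' \<le> p/q * measure lebesgue V + \<eta>"
      using core_step[OF mono p0 pq V(2,1,3) EP eta] by blast
    have "\<rho> * measure lebesgue V \<le> \<rho> * (\<rho>^n * M + real n * \<eta>)"
      using V(4) \<rho> by (intro mult_left_mono) auto
    also have "\<dots> \<le> \<rho>^(Suc n) * M + real n * \<eta>"
    proof -
      have "\<rho> * (real n * \<eta>) \<le> real n * \<eta>"
        using \<rho> eta by (intro mult_left_le_one_le) auto
      then show ?thesis by (simp add: algebra_simps)
    qed
    finally have "measure lebesgue V' \<le> \<rho>^(Suc n) * M + real n * \<eta> + \<eta>"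
      using V'(4) unfolding \<rho>_def by linarith
    then show ?case using V' by (intro exI[of _ V']) (auto simp: algebra_simps)
  qed
  have "negligible E"
    unfolding negligible_outer_le
  proof (intro allI impI)
    fix e :: real assume e: "e > 0"
    obtain n where n: "\<rho>^n < e / (2 * (M + 1))"
      using real_arch_pow_inv[of "e / (2 * (M + 1))" \<rho>] e M0 \<rho> by auto
    have "\<rho>^n * M \<le> e / (2 * (M + 1)) * M"
      using n M0 by (intro mult_right_mono) auto
    also have "\<dots> \<le> e / 2"
      using e M0 by (simp add: field_simps)
    finally have A: "\<rho>^n * M \<le> e / 2" .
    define \<eta> where "\<eta> = e / (2 * (n + 1))"
    have \<eta>: "\<eta> > 0" using e by (simp add: \<eta>_def)
    have B: "real n * \<eta> \<le> e / 2" using e by (simp add: \<eta>_def field_simps)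
    obtain V where V: "open V" "E \<subseteq> V" "V \<in> lmeasurable" "measure lebesgue V \<le> \<rho>^n * M + real n * \<eta>"
      using iter[OF \<eta>] by blast
    show "\<exists>T. E \<subseteq> T \<and> T \<in> lmeasurable \<and> measure lebesgue T \<le> e"
      using V A B by (intro exI[of _ V]) auto
  qed
  then show ?thesis by (simp add: E_def)
qed



definition RS :: "(real \<Rightarrow> real) \<Rightarrow> real \<Rightarrow> real \<Rightarrow> bool" where
  "RS f x p \<longleftrightarrow> (\<forall>d>0. \<exists>y. x < y \<and> y < x + d \<and> f y - f x < p * (y - x))"
definition LB :: "(real \<Rightarrow> real) \<Rightarrow> real \<Rightarrow> real \<Rightarrow> bool" where
  "LB f x q \<longleftrightarrow> (\<forall>d>0. \<exists>y. x - d < y \<and> y < x \<and> q * (x - y) < f x - f y)"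

lemma RS_refl: "RS f x p \<Longrightarrow> LS (\<lambda>y. - f (- y)) (- x) p"
  unfolding RS_def LS_def
proof (intro allI impI)
  fix d :: real assume "\<forall>d>0. \<exists>y>x. y < x + d \<and> f y - f x < p * (y - x)" "d > 0"
  then obtain y where "x < y" "y < x + d" "f y - f x < p * (y - x)" by blast
  then show "\<exists>y. - x - d < y \<and> y < - x \<and> - f (- (- x)) - - f (- y) < p * (- x - y)"
    by (intro exI[of _ "-y"]) (auto simp: algebra_simps)
qed

lemma LB_refl: "LB f x q \<Longrightarrow> RB (\<lambda>y. - f (- y)) (- x) q"
  unfolding LB_def RB_def
proof (intro allI impI)
  fix d :: real assume "\<forall>d>0. \<exists>y. x - d < y \<and> y < x \<and> q * (x - y) < f x - f y" "d > 0"
  then obtain y where "x - d < y" "y < x" "q * (x - y) < f x - f y" by blast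
  then show "\<exists>y>- x. y < - x + d \<and> q * (y - - x) < - f (- y) - - f (- (- x))"
    by (intro exI[of _ "-y"]) (auto simp: algebra_simps)
qed

lemma ev_left:
  assumes "d > 0" "\<And>y. x - d < y \<Longrightarrow> y < x \<Longrightarrow> P y"
  shows "eventually P (at_left (x::real))"
proof -
  have *: "\<exists>b<x. \<forall>y>b. y < x \<longrightarrow> P y" using assms by (intro exI[of _ "x - d"]) auto
  show ?thesis using eventually_at_left[of "x - d" x P] * assms(1) by simp
qed

lemma ev_right:
  assumes "d > 0" "\<And>y. x < y \<Longrightarrow> y < x + d \<Longrightarrow> P y"
  shows "eventually P (at_right (x::real))"
proof -
  have *: "\<exists>b>x. \<forall>y>x. y < b \<longrightarrow> P y" using assms by (intro exI[of _ "x + d"]) auto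
  show ?thesis using eventually_at_right[of x "x + d" P] * assms(1) by simp
qed

lemma H1:
  assumes "\<not> LS f x p"
  shows "ereal p \<le> Liminf (at_left x) (\<lambda>y. ereal ((f y - f x) / (y - x)))"
proof -
  obtain d where d: "d > 0" "\<And>y. x - d < y \<Longrightarrow> y < x \<Longrightarrow> p * (x - y) \<le> f x - f y"
    using assms unfolding LS_def by (meson not_less)
  have "eventually (\<lambda>y. ereal p \<le> ereal ((f y - f x) / (y - x))) (at_left x)"
  proof (rule ev_left[OF d(1)])
    fix y assume y: "x - d < y" "y < x"
    then have "p * (x - y) \<le> f x - f y" using d by blast
    then have "p \<le> (f x - f y) / (x - y)" using y by (simp add: field_simps)
    also have "(f x - f y) / (x - y) = (f y - f x) / (y - x)" by (metis minus_diff_eq minus_divide_divide)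
    finally show "ereal p \<le> ereal ((f y - f x) / (y - x))" by simp
  qed
  then show ?thesis by (rule Liminf_bounded)
qed

lemma H2:
  assumes "\<not> RB f x q"
  shows "Limsup (at_right x) (\<lambda>y. ereal ((f y - f x) / (y - x))) \<le> ereal q"
proof -
  obtain d where d: "d > 0" "\<And>y. x < y \<Longrightarrow> y < x + d \<Longrightarrow> f y - f x \<le> q * (y - x)"
    using assms unfolding RB_def by (meson not_less)
  have "eventually (\<lambda>y. ereal ((f y - f x) / (y - x)) \<le> ereal q) (at_right x)"
  proof (rule ev_right[OF d(1)])
    fix y assume y: "x < y" "y < x + d"
    then have "f y - f x \<le> q * (y - x)" using d by blast
    then have "(f y - f x) / (y - x) \<le> q" using y by (simp add: field_simps)
    then show "ereal ((f y - f x) / (y - x)) \<le> ereal q" by simp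
  qed
  then show ?thesis by (rule Limsup_bounded)
qed

lemma H3:
  assumes "\<not> RS f x p"
  shows "ereal p \<le> Liminf (at_right x) (\<lambda>y. ereal ((f y - f x) / (y - x)))"
proof -
  obtain d where d: "d > 0" "\<And>y. x < y \<Longrightarrow> y < x + d \<Longrightarrow> p * (y - x) \<le> f y - f x"
    using assms unfolding RS_def by (meson not_less)
  have "eventually (\<lambda>y. ereal p \<le> ereal ((f y - f x) / (y - x))) (at_right x)"
  proof (rule ev_right[OF d(1)])
    fix y assume y: "x < y" "y < x + d"
    then have "p * (y - x) \<le> f y - f x" using d by blast
    then have "p \<le> (f y - f x) / (y - x)" using y by (simp add: field_simps)
    then show "ereal p \<le> ereal ((f y - f x) / (y - x))" by simp
  qed
  then show ?thesis by (rule Liminf_bounded)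
qed

lemma H4:
  assumes "\<not> LB f x q"
  shows "Limsup (at_left x) (\<lambda>y. ereal ((f y - f x) / (y - x))) \<le> ereal q"
proof -
  obtain d where d: "d > 0" "\<And>y. x - d < y \<Longrightarrow> y < x \<Longrightarrow> f x - f y \<le> q * (x - y)"
    using assms unfolding LB_def by (meson not_less)
  have "eventually (\<lambda>y. ereal ((f y - f x) / (y - x)) \<le> ereal q) (at_left x)"
  proof (rule ev_left[OF d(1)])
    fix y assume y: "x - d < y" "y < x"
    then have "f x - f y \<le> q * (x - y)" using d by blast
    then have "(f x - f y) / (x - y) \<le> q" using y by (simp add: field_simps)
    also have "(f x - f y) / (x - y) = (f y - f x) / (y - x)" by (metis minus_diff_eq minus_divide_divide)
    finally show "ereal ((f y - f x) / (y - x)) \<le> ereal q" by simp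
  qed
  then show ?thesis by (rule Limsup_bounded)
qed

lemma rat_between:
  fixes l u :: ereal
  assumes "l < u"
  obtains p q where "p \<in> \<rat>" "q \<in> \<rat>" "p < q" "l < ereal p" "ereal q < u"
proof -
  obtain z1 where z1: "l < ereal z1" "ereal z1 < u" using ereal_dense2[OF assms] by blast
  obtain z2 where z2: "ereal z1 < ereal z2" "ereal z2 < u" using ereal_dense2[OF z1(2)] by blast
  obtain p where p: "p \<in> \<rat>" "z1 < p" "p < z2" using Rats_dense_in_real[of z1 z2] z2 by auto
  obtain q where q: "q \<in> \<rat>" "p < q" "q < z2" using Rats_dense_in_real[of p z2] p by auto
  show ?thesis
  proof (rule that[OF p(1) q(1) q(2)])
    show "l < ereal p" using z1(1) p(2) less_ereal.simps(1) order.strict_trans by blast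
    show "ereal q < u" using z2(2) q(3) less_ereal.simps(1) order.strict_trans by blast
  qed
qed

lemma mono_lip_diff_ae:
  fixes f :: "real \<Rightarrow> real"
  assumes mono: "mono f" and lip: "\<And>s t. \<bar>f s - f t\<bar> \<le> L * \<bar>s - t\<bar>"
  shows "\<exists>Z. negligible Z \<and> (\<forall>x\<in>{a<..<b} - Z. \<exists>D. (f has_real_derivative D) (at x))"
proof -
  define g where "g = (\<lambda>y. - f (- y))"
  have mg: "mono g" unfolding g_def using mono by (simp add: mono_def)
  define S1 where "S1 = (\<lambda>(p,q). {x\<in>{a<..<b}. p < q \<and> LS f x p \<and> RB f x q})"
  define S2 where "S2 = (\<lambda>(p,q). uminus ` {x\<in>{-b<..<-a}. p < q \<and> LS g x p \<and> RB g x q})"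
  define Z where "Z = \<Union>(S1 ` (\<rat> \<times> \<rat>)) \<union> \<Union>(S2 ` (\<rat> \<times> \<rat>))"
  have cQ: "countable (\<rat> \<times> (\<rat>::real set))" by (intro countable_SIGMA countable_rat)
  have n1: "negligible (S1 pq)" for pq
  proof (cases pq)
    case (Pair p q)
    show ?thesis
    proof (cases "p < q")
      case True
      have "S1 pq = {x\<in>{a<..<b}. LS f x p \<and> RB f x q}" using Pair True by (auto simp: S1_def)
      then show ?thesis using core_negl[OF mono True] by simp
    next
      case False
      then have "S1 pq = {}" using Pair by (auto simp: S1_def)
      then show ?thesis by simp
    qed
  qed
  have n2: "negligible (S2 pq)" for pq
  proof (cases pq)
    case (Pair p q)
    have "negligible {x\<in>{-b<..<-a}. p < q \<and> LS g x p \<and> RB g x q}"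
    proof (cases "p < q")
      case True
      then show ?thesis using core_negl[OF mg True, of "-b" "-a"] by simp
    next
      case False
      then show ?thesis by simp
    qed
    then show ?thesis unfolding S2_def Pair
      by (auto intro!: negligible_differentiable_image_negligible differentiable_on_minus differentiable_on_id)
  qed
  have "negligible Z" unfolding Z_def
    using cQ n1 n2 by (intro negligible_Un negligible_countable_Union) auto
  moreover have "\<exists>D. (f has_real_derivative D) (at x)" if x: "x \<in> {a<..<b}" "x \<notin> Z" for x
  proof -
    define Q where "Q = (\<lambda>y. ereal ((f y - f x) / (y - x)))"
    define ll where "ll = Liminf (at_left x) Q"
    define lu where "lu = Limsup (at_left x) Q"
    define rl where "rl = Liminf (at_right x) Q"
    define ru where "ru = Limsup (at_right x) Q"
    have N1: "\<not> (LS f x p \<and> RB f x q)" if "p \<in> \<rat>" "q \<in> \<rat>" "p < q" for p q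
    proof
      assume "LS f x p \<and> RB f x q"
      then have "x \<in> S1 (p,q)" using x that by (auto simp: S1_def)
      then show False using x that unfolding Z_def by blast
    qed
    have N2: "\<not> (RS f x p \<and> LB f x q)" if "p \<in> \<rat>" "q \<in> \<rat>" "p < q" for p q
    proof
      assume "RS f x p \<and> LB f x q"
      then have "LS g (-x) p \<and> RB g (-x) q" unfolding g_def using RS_refl LB_refl by blast
      then have "-x \<in> {x\<in>{-b<..<-a}. p < q \<and> LS g x p \<and> RB g x q}" using x that by auto
      then have "- (-x) \<in> uminus ` {x\<in>{-b<..<-a}. p < q \<and> LS g x p \<and> RB g x q}" by (rule imageI)
      then have "x \<in> S2 (p,q)" unfolding S2_def by simp
      then show False using x that unfolding Z_def by auto
    qed
    have ru_ll: "ru \<le> ll"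
    proof (rule ccontr)
      assume "\<not> ru \<le> ll"
      then have "ll < ru" by simp
      then obtain p q where pq: "p \<in> \<rat>" "q \<in> \<rat>" "p < q" "ll < ereal p" "ereal q < ru"
        by (rule rat_between)
      show False
      proof (cases "LS f x p")
        case False
        then show False using H1[OF False] pq unfolding ll_def Q_def by simp
      next
        case True
        then have "\<not> RB f x q" using N1 pq by blast
        then show False using H2[of f x q] pq unfolding ru_def Q_def by simp
      qed
    qed
    have lu_rl: "lu \<le> rl"
    proof (rule ccontr)
      assume "\<not> lu \<le> rl"
      then have "rl < lu" by simp
      then obtain p q where pq: "p \<in> \<rat>" "q \<in> \<rat>" "p < q" "rl < ereal p" "ereal q < lu"
        by (rule rat_between)
      show False
      proof (cases "RS f x p")
        case False
        then show False using H3[OF False] pq unfolding rl_def Q_def by simp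
      next
        case True
        then have "\<not> LB f x q" using N2 pq by blast
        then show False using H4[of f x q] pq unfolding lu_def Q_def by simp
      qed
    qed
    have "ll \<le> lu" unfolding ll_def lu_def by (rule Liminf_le_Limsup) simp
    moreover have "rl \<le> ru" unfolding rl_def ru_def by (rule Liminf_le_Limsup) simp
    ultimately have eqs: "ll = ru" "lu = ru" "rl = ru" using ru_ll lu_rl by auto
    have Qb: "0 \<le> (f y - f x) / (y - x) \<and> (f y - f x) / (y - x) \<le> L" if "y \<noteq> x" for y
    proof -
      have "0 \<le> (f y - f x) / (y - x)"
      proof (cases "y < x")
        case True
        then have "f y \<le> f x" using mono by (simp add: monoD)
        then show ?thesis using True by (simp add: divide_nonpos_neg)
      next
        case False
        then have "x < y" using that by simp
        then have "f x \<le> f y" using mono by (simp add: monoD)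
        then show ?thesis using \<open>x < y\<close> by simp
      qed
      moreover have "\<bar>(f y - f x) / (y - x)\<bar> \<le> L"
        using lip[of y x] that by (simp add: abs_divide divide_le_eq)
      ultimately show ?thesis using abs_ge_self[of "(f y - f x) / (y - x)"] by linarith
    qed
    have evl: "eventually (\<lambda>y. y \<noteq> x) (at_left x)" by (rule ev_left[of 1]) auto
    have "0 \<le> ll" unfolding ll_def Q_def
      by (rule Liminf_bounded) (rule eventually_mono[OF evl], use Qb in simp)
    moreover have "ru \<le> L" unfolding ru_def Q_def
    proof (rule Limsup_bounded)
      show "\<forall>\<^sub>F n in at_right x. ereal ((f n - f x) / (n - x)) \<le> ereal L"
        by (rule ev_right[of 1]) (use Qb in auto)
    qed
    ultimately obtain c where c: "ru = ereal c" using eqs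
      by (cases ru) auto
    have tl: "(Q \<longlongrightarrow> ereal c) (at_left x)"
      by (rule Liminf_eq_Limsup) (use eqs c in \<open>auto simp: ll_def lu_def\<close>)
    have tr: "(Q \<longlongrightarrow> ereal c) (at_right x)"
      by (rule Liminf_eq_Limsup) (use eqs c in \<open>auto simp: rl_def ru_def\<close>)
    have "(Q \<longlongrightarrow> ereal c) (at x)" using tl tr by (rule filterlim_split_at)
    then have "((\<lambda>y. (f y - f x) / (y - x)) \<longlongrightarrow> c) (at x)" unfolding Q_def by simp
    then have "(f has_real_derivative c) (at x)" by (simp add: has_field_derivative_iff)
    then show ?thesis by blast
  qed
  ultimately show ?thesis by blast
qed


lemma tag_interval:
  assumes "p tagged_division_of {a..b::real}" "(x, K) \<in> p"
  shows "K = {Inf K..Sup K}" "Inf K \<le> Sup K" "x \<in> K" "K \<subseteq> {a..b}"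
proof -
  obtain u v where K: "K = cbox u v" using tagged_division_ofD(4)[OF assms] by blast
  have xK: "x \<in> K" using tagged_division_ofD(2)[OF assms] .
  then have uv: "u \<le> v" using K by auto
  show "K = {Inf K..Sup K}" "Inf K \<le> Sup K" using K uv by auto
  show "x \<in> K" by (rule xK)
  show "K \<subseteq> {a..b}" using tagged_division_ofD(3)[OF assms] .
qed

lemma interior_disj_Icc:
  fixes u1 v1 u2 v2 :: real
  assumes "u1 < v1" "u2 < v2" "{u1<..<v1} \<inter> {u2<..<v2} = {}"
  shows "v1 \<le> u2 \<or> v2 \<le> u1"
proof (rule ccontr)
  assume "\<not> (v1 \<le> u2 \<or> v2 \<le> u1)"
  then have "(max u1 u2 + min v1 v2) / 2 \<in> {u1<..<v1} \<inter> {u2<..<v2}" using assms(1,2) by auto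
  then show False using assms(3) by blast
qed

lemma ac_mono:
  fixes f f' :: "real \<Rightarrow> real"
  assumes ab: "a \<le> b" and ac: "abs_continuous_on a b f" and N: "negligible N"
    and der: "\<And>x. x \<in> {a..b} - N \<Longrightarrow> (f has_real_derivative f' x) (at x within {a..b}) \<and> 0 \<le> f' x"
  shows "f a \<le> f b"
proof -
  have main: "f a \<le> f b + \<epsilon> + \<eta> * (b - a)" if \<epsilon>: "\<epsilon> > 0" and \<eta>: "\<eta> > 0" for \<epsilon> \<eta>
  proof -
    define g where "g = (\<lambda>t. f t + \<eta> * t)"
    obtain \<delta> where \<delta>: "\<delta> > 0" and acd: "\<forall>(n::nat) (u::nat \<Rightarrow> real) (v::nat \<Rightarrow> real). (\<forall>k<n. a \<le> u k \<and> u k \<le> v k \<and> v k \<le> b) \<and>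
        (\<forall>k<n. \<forall>l<n. k \<noteq> l \<longrightarrow> v k \<le> u l \<or> v l \<le> u k) \<and>
        (\<Sum>k<n. v k - u k) < \<delta> \<longrightarrow> (\<Sum>k<n. \<bar>f (v k) - f (u k)\<bar>) < \<epsilon>"
      using ac \<epsilon> unfolding abs_continuous_on_def by blast
    obtain Op where Op: "open Op" "N \<subseteq> Op" "Op \<in> lmeasurable" "measure lebesgue Op < \<delta>"
      using neg_open_small[OF N \<delta>] by blast
    have "\<exists>r>0. (x \<in> N \<longrightarrow> ball x r \<subseteq> Op) \<and>
        (x \<in> {a..b} - N \<longrightarrow> (\<forall>y\<in>{a..b}. \<bar>y - x\<bar> < r \<longrightarrow> (x < y \<longrightarrow> g x \<le> g y) \<and> (y < x \<longrightarrow> g y \<le> g x)))" for x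
    proof (cases "x \<in> N")
      case True
      then obtain r where "r > 0" "ball x r \<subseteq> Op" using Op openE by blast
      then show ?thesis using True by auto
    next
      case False
      show ?thesis
      proof (cases "x \<in> {a..b}")
        case xin: True
        have d: "(g has_real_derivative f' x + \<eta>) (at x within {a..b})" "0 < f' x + \<eta>"
          using der[of x] xin False \<eta> unfolding g_def
          by (auto intro!: derivative_eq_intros)
        obtain d1 where d1: "d1 > 0" "\<forall>h>0. x + h \<in> {a..b} \<longrightarrow> h < d1 \<longrightarrow> g x < g (x + h)"
          using has_real_derivative_pos_inc_right[OF d] by blast
        obtain d2 where d2: "d2 > 0" "\<forall>h>0. x - h \<in> {a..b} \<longrightarrow> h < d2 \<longrightarrow> g (x - h) < g x"
          using has_real_derivative_pos_inc_left[OF d] by blast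
        show ?thesis
        proof (intro exI[of _ "min d1 d2"] conjI impI ballI)
          show "0 < min d1 d2" using d1 d2 by simp
          fix y assume y: "y \<in> {a..b}" "\<bar>y - x\<bar> < min d1 d2"
          { assume "x < y"
            then show "g x \<le> g y" using d1(2)[rule_format, of "y - x"] y by auto }
          { assume "y < x"
            then show "g y \<le> g x" using d2(2)[rule_format, of "x - y"] y by auto }
        qed (use False in auto)
      next
        case False
        then show ?thesis using \<open>x \<notin> N\<close> by (intro exI[of _ 1]) auto
      qed
    qed
    then have "\<forall>x. \<exists>r>0. (x \<in> N \<longrightarrow> ball x r \<subseteq> Op) \<and>
        (x \<in> {a..b} - N \<longrightarrow> (\<forall>y\<in>{a..b}. \<bar>y - x\<bar> < r \<longrightarrow> (x < y \<longrightarrow> g x \<le> g y) \<and> (y < x \<longrightarrow> g y \<le> g x)))" by blast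
    from choice[OF this] obtain r where r0: "\<forall>x. r x > 0 \<and> (x \<in> N \<longrightarrow> ball x (r x) \<subseteq> Op) \<and>
        (x \<in> {a..b} - N \<longrightarrow> (\<forall>y\<in>{a..b}. \<bar>y - x\<bar> < r x \<longrightarrow> (x < y \<longrightarrow> g x \<le> g y) \<and> (y < x \<longrightarrow> g y \<le> g x)))" by blast
    have r: "\<And>x. r x > 0" "\<And>x. x \<in> N \<Longrightarrow> ball x (r x) \<subseteq> Op"
      "\<And>x y. x \<in> {a..b} - N \<Longrightarrow> y \<in> {a..b} \<Longrightarrow> \<bar>y - x\<bar> < r x \<Longrightarrow> x < y \<Longrightarrow> g x \<le> g y"
      "\<And>x y. x \<in> {a..b} - N \<Longrightarrow> y \<in> {a..b} \<Longrightarrow> \<bar>y - x\<bar> < r x \<Longrightarrow> y < x \<Longrightarrow> g y \<le> g x"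
      using r0 by blast+
    have "gauge (\<lambda>x. ball x (r x))" using r(1) by (intro gauge_ball_dependent) auto
    then obtain p where p: "p tagged_division_of {a..b}" "(\<lambda>x. ball x (r x)) fine p"
      by (rule fine_division_exists_real)
    have fp: "finite p" using p(1) by blast
    have Kp: "K = {Inf K..Sup K}" "Inf K \<le> Sup K" "x \<in> K" "K \<subseteq> {a..b}" "K \<subseteq> ball x (r x)"
      if "(x, K) \<in> p" for x K
      using tag_interval[OF p(1) that] p(2) that unfolding fine_def by auto
    define pN where "pN = {(x, K) \<in> p. x \<in> N}"
    define pN' where "pN' = {(x, K) \<in> p. x \<in> N \<and> Inf K < Sup K}"
    have add: "(\<Sum>(x, K)\<in>p. g (Sup K) - g (Inf K)) = g b - g a"
      by (rule additive_tagged_division_1[OF ab p(1)])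
    have split: "(\<Sum>(x, K)\<in>p. g (Sup K) - g (Inf K)) =
        (\<Sum>(x, K)\<in>p - pN. g (Sup K) - g (Inf K)) + (\<Sum>(x, K)\<in>pN. g (Sup K) - g (Inf K))"
      by (rule sum.subset_diff) (auto simp: pN_def fp)
    have G: "(\<Sum>(x, K)\<in>p - pN. g (Sup K) - g (Inf K)) \<ge> 0"
    proof (rule sum_nonneg)
      fix xK assume xK: "xK \<in> p - pN"
      obtain x K where xKe: "xK = (x, K)" by fastforce
      then have xKp: "(x, K) \<in> p" and xN: "x \<notin> N" using xK by (auto simp: pN_def)
      note k = Kp[OF xKp]
      have xab: "x \<in> {a..b} - N" using k xN by auto
      have i1: "Inf K \<in> K" "Sup K \<in> K" using k(1,2) by (metis atLeastAtMost_iff order_refl)+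
      have l: "g (Inf K) \<le> g x"
      proof (cases "Inf K < x")
        case True
        have "\<bar>Inf K - x\<bar> < r x" using k(5) i1 by (auto simp: dist_real_def)
        then show ?thesis using r(4)[OF xab _ _ True] k(4) i1 by auto
      next
        case False
        then have "Inf K = x" using k(1,3) by (metis atLeastAtMost_iff linorder_not_le order_antisym_conv)
        then show ?thesis by simp
      qed
      have u: "g x \<le> g (Sup K)"
      proof (cases "x < Sup K")
        case True
        have "\<bar>Sup K - x\<bar> < r x" using k(5) i1 by (auto simp: dist_real_def)
        then show ?thesis using r(3)[OF xab _ _ True] k(4) i1 by auto
      next
        case False
        then have "Sup K = x" using k(1,3) by (metis atLeastAtMost_iff linorder_not_le order_antisym_conv)
        then show ?thesis by simp
      qed
      show "(case xK of (x, K) \<Rightarrow> g (Sup K) - g (Inf K)) \<ge> 0" using l u xKe by simp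
    qed
    have B1: "(\<Sum>(x, K)\<in>pN. g (Sup K) - g (Inf K)) \<ge> - (\<Sum>(x, K)\<in>pN. \<bar>f (Sup K) - f (Inf K)\<bar>)"
      unfolding sum_negf[symmetric]
    proof (rule sum_mono)
      fix xK assume xK: "xK \<in> pN"
      obtain x K where xKe: "xK = (x, K)" by fastforce
      then have "(x, K) \<in> p" using xK by (auto simp: pN_def)
      then have "Inf K \<le> Sup K" using Kp by blast
      then have "\<eta> * Inf K \<le> \<eta> * Sup K" using \<eta> by (intro mult_left_mono) auto
      moreover have "f (Inf K) - f (Sup K) \<le> \<bar>f (Sup K) - f (Inf K)\<bar>" by linarith
      ultimately show "- (case xK of (x, K) \<Rightarrow> \<bar>f (Sup K) - f (Inf K)\<bar>) \<le> (case xK of (x, K) \<Rightarrow> g (Sup K) - g (Inf K))"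
        using xKe unfolding g_def by simp
    qed
    have B2: "(\<Sum>(x, K)\<in>pN. \<bar>f (Sup K) - f (Inf K)\<bar>) = (\<Sum>(x, K)\<in>pN'. \<bar>f (Sup K) - f (Inf K)\<bar>)"
    proof (rule sum.mono_neutral_right)
      show "finite pN" by (rule finite_subset[OF _ fp]) (auto simp: pN_def)
      show "pN' \<subseteq> pN" by (auto simp: pN_def pN'_def)
      show "\<forall>i\<in>pN - pN'. (case i of (x, K) \<Rightarrow> \<bar>f (Sup K) - f (Inf K)\<bar>) = 0"
      proof
        fix xK assume xK: "xK \<in> pN - pN'"
        obtain x K where xKe: "xK = (x, K)" by fastforce
        then have "(x, K) \<in> p" "\<not> Inf K < Sup K" using xK by (auto simp: pN_def pN'_def)
        then have "Inf K = Sup K" using Kp by force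
        then show "(case xK of (x, K) \<Rightarrow> \<bar>f (Sup K) - f (Inf K)\<bar>) = 0" using xKe by simp
      qed
    qed
    have fN': "finite pN'" by (rule finite_subset[OF _ fp]) (auto simp: pN'_def)
    obtain e where e: "bij_betw e {0..<card pN'} pN'" using ex_bij_betw_nat_finite[OF fN'] by blast
    define n where "n = card pN'"
    define u where "u k = Inf (snd (e k))" for k
    define v where "v k = Sup (snd (e k))" for k
    have ek: "e k \<in> pN'" if "k < n" for k using e that unfolding n_def bij_betw_def by auto
    have ekp: "(fst (e k), snd (e k)) \<in> p" "fst (e k) \<in> N" "u k < v k" if "k < n" for k
      using ek[OF that] unfolding pN'_def u_def v_def by auto
    have c1: "\<forall>k<n. a \<le> u k \<and> u k \<le> v k \<and> v k \<le> b"
    proof (intro allI impI)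
      fix k assume k: "k < n"
      note kk = Kp[OF ekp(1)[OF k]]
      have "u k \<in> snd (e k)" "v k \<in> snd (e k)" using kk(1,2) unfolding u_def v_def
        by (metis atLeastAtMost_iff order_refl)+
      then show "a \<le> u k \<and> u k \<le> v k \<and> v k \<le> b" using kk(4) ekp(3)[OF k] by auto
    qed
    have disj: "{u k<..<v k} \<inter> {u l<..<v l} = {}" if "k < n" "l < n" "k \<noteq> l" for k l
    proof -
      have "e k \<noteq> e l" using e that unfolding n_def bij_betw_def inj_on_def by auto
      then have "interior (snd (e k)) \<inter> interior (snd (e l)) = {}"
        using tagged_division_ofD(5)[OF p(1) ekp(1)[OF that(1)] ekp(1)[OF that(2)]] by simp
      moreover have "snd (e k) = {u k..v k}" "snd (e l) = {u l..v l}"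
        using Kp(1)[OF ekp(1)[OF that(1)]] Kp(1)[OF ekp(1)[OF that(2)]] unfolding u_def v_def by auto
      ultimately show ?thesis by simp
    qed
    have c2: "\<forall>k<n. \<forall>l<n. k \<noteq> l \<longrightarrow> v k \<le> u l \<or> v l \<le> u k"
    proof (intro allI impI)
      fix k l assume kl: "k < n" "l < n" "k \<noteq> l"
      show "v k \<le> u l \<or> v l \<le> u k"
        by (rule interior_disj_Icc[OF ekp(3)[OF kl(1)] ekp(3)[OF kl(2)] disj[OF kl]])
    qed
    have c3: "(\<Sum>k<n. v k - u k) < \<delta>"
    proof -
      have "(\<Sum>k<n. v k - u k) = (\<Sum>k<n. measure lebesgue {u k<..<v k})"
        using ekp(3) by (intro sum.cong) (auto simp: less_imp_le)
      also have "\<dots> = measure lebesgue (\<Union>k<n. {u k<..<v k})"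
      proof (rule measure_UNION'[symmetric])
        show "pairwise (\<lambda>i j. disjnt {u i<..<v i} {u j<..<v j}) {..<n}"
          unfolding pairwise_def disjnt_def using disj by blast
      qed auto
      also have "\<dots> \<le> measure lebesgue Op"
      proof (rule measure_mono_fmeasurable)
        show "(\<Union>k<n. {u k<..<v k}) \<subseteq> Op"
        proof (intro UN_least)
          fix k assume "k \<in> {..<n}"
          then have k: "k < n" by simp
          note kk = Kp[OF ekp(1)[OF k]]
          have "{u k<..<v k} \<subseteq> snd (e k)" using kk(1) unfolding u_def v_def by auto
          also have "\<dots> \<subseteq> ball (fst (e k)) (r (fst (e k)))" using kk(5) .
          also have "\<dots> \<subseteq> Op" using r(2) ekp(2)[OF k] by blast
          finally show "{u k<..<v k} \<subseteq> Op" .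
        qed
      qed (use Op in auto)
      finally show ?thesis using Op(4) by linarith
    qed
    have B3: "(\<Sum>k<n. \<bar>f (v k) - f (u k)\<bar>) < \<epsilon>" using acd[rule_format, of n u v] c1 c2 c3 by blast
    have B4: "(\<Sum>(x, K)\<in>pN'. \<bar>f (Sup K) - f (Inf K)\<bar>) = (\<Sum>k<n. \<bar>f (v k) - f (u k)\<bar>)"
    proof -
      have "(\<Sum>k\<in>{0..<card pN'}. (\<lambda>(x, K). \<bar>f (Sup K) - f (Inf K)\<bar>) (e k)) = (\<Sum>(x, K)\<in>pN'. \<bar>f (Sup K) - f (Inf K)\<bar>)"
        by (rule sum.reindex_bij_betw[OF e])
      moreover have "(\<Sum>k\<in>{0..<card pN'}. (\<lambda>(x, K). \<bar>f (Sup K) - f (Inf K)\<bar>) (e k)) = (\<Sum>k<n. \<bar>f (v k) - f (u k)\<bar>)"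
        unfolding n_def u_def v_def by (intro sum.cong) (auto simp: case_prod_beta atLeast0LessThan)
      ultimately show ?thesis by simp
    qed
    have "g b - g a \<ge> - \<epsilon>" using add split G B1 B2 B3 B4 by linarith
    then show ?thesis unfolding g_def by (simp add: algebra_simps)
  qed
  show ?thesis
  proof (rule ccontr)
    assume "\<not> f a \<le> f b"
    then have d: "f a - f b > 0" by simp
    define \<eta> where "\<eta> = (f a - f b) / (4 * (b - a + 1))"
    have \<eta>: "\<eta> > 0" using d ab by (simp add: \<eta>_def)
    have "\<eta> * (b - a) \<le> (f a - f b) / 4"
    proof -
      have "\<eta> * (b - a) \<le> \<eta> * (b - a + 1)" using \<eta> by simp
      also have "\<dots> = (f a - f b) / 4"
      proof -
        have "4 * b - 4 * a + 4 \<noteq> 0" "b - a + 1 \<noteq> 0" using ab by auto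
        then show ?thesis by (simp add: \<eta>_def field_simps)
      qed
      finally show ?thesis .
    qed
    moreover have "f a \<le> f b + (f a - f b) / 4 + \<eta> * (b - a)"
      using main[of "(f a - f b) / 4" \<eta>] d \<eta> by simp
    ultimately show False using d by argo
  qed
qed


lemma ac_lip:
  assumes L: "0 \<le> L" and lip: "\<And>x y. x \<in> {a..b} \<Longrightarrow> y \<in> {a..b} \<Longrightarrow> \<bar>f x - f y\<bar> \<le> L * \<bar>x - y\<bar>"
  shows "abs_continuous_on a b f"
  unfolding abs_continuous_on_def
proof (intro allI impI)
  fix \<epsilon> :: real assume \<epsilon>: "\<epsilon> > 0"
  show "\<exists>\<delta>>0. \<forall>(n::nat) (u::nat \<Rightarrow> real) (v::nat \<Rightarrow> real).
        (\<forall>k<n. a \<le> u k \<and> u k \<le> v k \<and> v k \<le> b) \<and>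
        (\<forall>k<n. \<forall>l<n. k \<noteq> l \<longrightarrow> v k \<le> u l \<or> v l \<le> u k) \<and>
        (\<Sum>k<n. v k - u k) < \<delta>
        \<longrightarrow> (\<Sum>k<n. \<bar>f (v k) - f (u k)\<bar>) < \<epsilon>"
  proof (intro exI[of _ "\<epsilon> / (L + 1)"] conjI allI impI)
    show "\<epsilon> / (L + 1) > 0" using \<epsilon> L by simp
    fix n :: nat and u v :: "nat \<Rightarrow> real"
    assume H: "(\<forall>k<n. a \<le> u k \<and> u k \<le> v k \<and> v k \<le> b) \<and>
        (\<forall>k<n. \<forall>l<n. k \<noteq> l \<longrightarrow> v k \<le> u l \<or> v l \<le> u k) \<and> (\<Sum>k<n. v k - u k) < \<epsilon> / (L + 1)"
    have "(\<Sum>k<n. \<bar>f (v k) - f (u k)\<bar>) \<le> (\<Sum>k<n. L * (v k - u k))"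
    proof (rule sum_mono)
      fix k assume "k \<in> {..<n}"
      then have k: "a \<le> u k" "u k \<le> v k" "v k \<le> b" using H by auto
      then show "\<bar>f (v k) - f (u k)\<bar> \<le> L * (v k - u k)" using lip[of "v k" "u k"] by simp
    qed
    also have "\<dots> = L * (\<Sum>k<n. v k - u k)" by (simp add: sum_distrib_left)
    also have "\<dots> \<le> L * (\<epsilon> / (L + 1))" using H L by (intro mult_left_mono) auto
    also have "\<dots> < \<epsilon>" using L \<epsilon> by (simp add: field_simps)
    finally show "(\<Sum>k<n. \<bar>f (v k) - f (u k)\<bar>) < \<epsilon>" .
  qed
qed

lemma ac_add:
  assumes f: "abs_continuous_on a b f" and g: "abs_continuous_on a b g"
  shows "abs_continuous_on a b (\<lambda>x. f x + g x)"
  unfolding abs_continuous_on_def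
proof (intro allI impI)
  fix \<epsilon> :: real assume \<epsilon>: "\<epsilon> > 0"
  then have e2: "\<epsilon> / 2 > 0" by simp
  obtain d1 where d1: "d1 > 0" "\<forall>(n::nat) (u::nat \<Rightarrow> real) (v::nat \<Rightarrow> real).
        (\<forall>k<n. a \<le> u k \<and> u k \<le> v k \<and> v k \<le> b) \<and>
        (\<forall>k<n. \<forall>l<n. k \<noteq> l \<longrightarrow> v k \<le> u l \<or> v l \<le> u k) \<and>
        (\<Sum>k<n. v k - u k) < d1
        \<longrightarrow> (\<Sum>k<n. \<bar>f (v k) - f (u k)\<bar>) < \<epsilon> / 2"
    using f e2 unfolding abs_continuous_on_def by blast
  obtain d2 where d2: "d2 > 0" "\<forall>(n::nat) (u::nat \<Rightarrow> real) (v::nat \<Rightarrow> real).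
        (\<forall>k<n. a \<le> u k \<and> u k \<le> v k \<and> v k \<le> b) \<and>
        (\<forall>k<n. \<forall>l<n. k \<noteq> l \<longrightarrow> v k \<le> u l \<or> v l \<le> u k) \<and>
        (\<Sum>k<n. v k - u k) < d2
        \<longrightarrow> (\<Sum>k<n. \<bar>g (v k) - g (u k)\<bar>) < \<epsilon> / 2"
    using g e2 unfolding abs_continuous_on_def by blast
  show "\<exists>\<delta>>0. \<forall>(n::nat) (u::nat \<Rightarrow> real) (v::nat \<Rightarrow> real).
        (\<forall>k<n. a \<le> u k \<and> u k \<le> v k \<and> v k \<le> b) \<and>
        (\<forall>k<n. \<forall>l<n. k \<noteq> l \<longrightarrow> v k \<le> u l \<or> v l \<le> u k) \<and>
        (\<Sum>k<n. v k - u k) < \<delta>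
        \<longrightarrow> (\<Sum>k<n. \<bar>(f (v k) + g (v k)) - (f (u k) + g (u k))\<bar>) < \<epsilon>"
  proof (intro exI[of _ "min d1 d2"] conjI allI impI)
    show "min d1 d2 > 0" using d1 d2 by simp
    fix n :: nat and u v :: "nat \<Rightarrow> real"
    assume H: "(\<forall>k<n. a \<le> u k \<and> u k \<le> v k \<and> v k \<le> b) \<and>
        (\<forall>k<n. \<forall>l<n. k \<noteq> l \<longrightarrow> v k \<le> u l \<or> v l \<le> u k) \<and> (\<Sum>k<n. v k - u k) < min d1 d2"
    have A: "(\<Sum>k<n. \<bar>f (v k) - f (u k)\<bar>) < \<epsilon> / 2" using d1(2)[rule_format, of n u v] H by auto
    have B: "(\<Sum>k<n. \<bar>g (v k) - g (u k)\<bar>) < \<epsilon> / 2" using d2(2)[rule_format, of n u v] H by auto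
    have "(\<Sum>k<n. \<bar>(f (v k) + g (v k)) - (f (u k) + g (u k))\<bar>) \<le> (\<Sum>k<n. \<bar>f (v k) - f (u k)\<bar> + \<bar>g (v k) - g (u k)\<bar>)"
      by (rule sum_mono) linarith
    also have "\<dots> = (\<Sum>k<n. \<bar>f (v k) - f (u k)\<bar>) + (\<Sum>k<n. \<bar>g (v k) - g (u k)\<bar>)" by (rule sum.distrib)
    finally show "(\<Sum>k<n. \<bar>(f (v k) + g (v k)) - (f (u k) + g (u k))\<bar>) < \<epsilon>" using A B by linarith
  qed
qed

lemma ac_neg:
  assumes f: "abs_continuous_on a b f"
  shows "abs_continuous_on a b (\<lambda>x. - f x)"
proof -
  have eq: "\<bar>(- f s) - (- f t)\<bar> = \<bar>f s - f t\<bar>" for s t by linarith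
  show ?thesis using f unfolding abs_continuous_on_def eq .
qed

lemma ac_sum:
  assumes "finite S" "\<forall>j\<in>S. abs_continuous_on a b (f j)"
  shows "abs_continuous_on a b (\<lambda>x. \<Sum>j\<in>S. f j x)"
  using assms
proof (induction S rule: finite_induct)
  case empty
  show ?case by simp (rule ac_lip[of 0], auto)
next
  case (insert j S)
  have "abs_continuous_on a b (\<lambda>x. f j x + (\<Sum>j\<in>S. f j x))"
    using insert by (intro ac_add) auto
  then show ?case using insert by simp
qed

lemma ac_sub:
  assumes f: "abs_continuous_on a b f" and "a \<le> c" "d \<le> b"
  shows "abs_continuous_on c d f"
  unfolding abs_continuous_on_def
proof (intro allI impI)
  fix \<epsilon> :: real assume \<epsilon>: "\<epsilon> > 0"
  obtain d1 where d1: "d1 > 0" "\<forall>(n::nat) (u::nat \<Rightarrow> real) (v::nat \<Rightarrow> real).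
        (\<forall>k<n. a \<le> u k \<and> u k \<le> v k \<and> v k \<le> b) \<and>
        (\<forall>k<n. \<forall>l<n. k \<noteq> l \<longrightarrow> v k \<le> u l \<or> v l \<le> u k) \<and>
        (\<Sum>k<n. v k - u k) < d1
        \<longrightarrow> (\<Sum>k<n. \<bar>f (v k) - f (u k)\<bar>) < \<epsilon>"
    using f \<epsilon> unfolding abs_continuous_on_def by blast
  show "\<exists>\<delta>>0. \<forall>(n::nat) (u::nat \<Rightarrow> real) (v::nat \<Rightarrow> real).
        (\<forall>k<n. c \<le> u k \<and> u k \<le> v k \<and> v k \<le> d) \<and>
        (\<forall>k<n. \<forall>l<n. k \<noteq> l \<longrightarrow> v k \<le> u l \<or> v l \<le> u k) \<and>
        (\<Sum>k<n. v k - u k) < \<delta>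
        \<longrightarrow> (\<Sum>k<n. \<bar>f (v k) - f (u k)\<bar>) < \<epsilon>"
  proof (intro exI[of _ d1] conjI allI impI)
    show "d1 > 0" by (rule d1(1))
    fix n :: nat and u v :: "nat \<Rightarrow> real"
    assume H: "(\<forall>k<n. c \<le> u k \<and> u k \<le> v k \<and> v k \<le> d) \<and>
        (\<forall>k<n. \<forall>l<n. k \<noteq> l \<longrightarrow> v k \<le> u l \<or> v l \<le> u k) \<and> (\<Sum>k<n. v k - u k) < d1"
    then have "(\<forall>k<n. a \<le> u k \<and> u k \<le> v k \<and> v k \<le> b)" using assms(2,3) by force
    then show "(\<Sum>k<n. \<bar>f (v k) - f (u k)\<bar>) < \<epsilon>" using d1(2)[rule_format, of n u v] H by blast
  qed
qed


lemma negl_of_null: "N \<in> null_sets lborel \<Longrightarrow> negligible N"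
  unfolding negligible_iff_null_sets by (rule null_sets_completionI)

lemma forward:
  fixes I :: nat and \<beta> :: real and \<psi> \<gamma> :: "nat \<Rightarrow> real \<Rightarrow> real"
  assumes \<beta>: "\<beta> > 0" and v: "valid_occupancy I \<beta> \<gamma>"
    and \<psi>: "\<forall>i\<le>I. \<forall>x\<in>{0..\<beta>}. \<psi> i x = cumulative_occupancy \<gamma> i x"
  shows "\<forall>i\<le>I. \<forall>x y. 0 \<le> x \<longrightarrow> x < y \<longrightarrow> y \<le> \<beta> \<longrightarrow>
       (if i = 0 then 0 else \<psi> (i-1) x) \<le> \<psi> i x \<and>
       \<psi> i y \<le> \<psi> i x \<and>
       (\<Sum>k\<le>I. \<psi> k x - \<psi> k y) \<le> y - x"
proof -
  have ac\<gamma>: "\<forall>j\<le>I+1. abs_continuous_on 0 \<beta> (\<gamma> j)"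
    and sx: "\<forall>x\<in>{0..\<beta>}. in_simplex I (\<lambda>j. \<gamma> j x)"
    using v unfolding valid_occupancy_def by blast+
  obtain \<theta> where \<theta>: "AE x in lborel. x \<in> {0..\<beta>} \<longrightarrow>
          (\<gamma> 0 has_real_derivative - \<theta> 0 x) (at x within {0..\<beta>}) \<and>
          (\<forall>j\<in>{1..I}. (\<gamma> j has_real_derivative \<theta> (j-1) x - \<theta> j x) (at x within {0..\<beta>})) \<and>
          (\<gamma> (I+1) has_real_derivative \<theta> I x) (at x within {0..\<beta>}) \<and>
          in_simplex I (\<lambda>j. \<theta> j x)"
    using v unfolding valid_occupancy_def by blast
  then obtain N0 where N0: "{x \<in> space lborel. \<not> (x \<in> {0..\<beta>} \<longrightarrow>
          (\<gamma> 0 has_real_derivative - \<theta> 0 x) (at x within {0..\<beta>}) \<and>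
          (\<forall>j\<in>{1..I}. (\<gamma> j has_real_derivative \<theta> (j-1) x - \<theta> j x) (at x within {0..\<beta>})) \<and>
          (\<gamma> (I+1) has_real_derivative \<theta> I x) (at x within {0..\<beta>}) \<and>
          in_simplex I (\<lambda>j. \<theta> j x))} \<subseteq> N0" "emeasure lborel N0 = 0" "N0 \<in> sets lborel"
    by (rule AE_E)
  have negN: "negligible N0" using N0(2,3) by (intro negl_of_null) (simp add: null_sets_def)
  have good: "(\<gamma> 0 has_real_derivative - \<theta> 0 x) (at x within {0..\<beta>}) \<and>
          (\<forall>j\<in>{1..I}. (\<gamma> j has_real_derivative \<theta> (j-1) x - \<theta> j x) (at x within {0..\<beta>})) \<and>
          (\<gamma> (I+1) has_real_derivative \<theta> I x) (at x within {0..\<beta>}) \<and>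
          in_simplex I (\<lambda>j. \<theta> j x)" if "x \<in> {0..\<beta>} - N0" for x
    using N0(1) that by auto
  have dPsi: "((\<lambda>t. \<Sum>j\<le>i. \<gamma> j t) has_real_derivative - \<theta> i x) (at x within {0..\<beta>})"
    if x: "x \<in> {0..\<beta>} - N0" and i: "i \<le> I" for x i
    using i
  proof (induction i)
    case 0
    then show ?case using good[OF x] by simp
  next
    case (Suc i)
    have d1: "((\<lambda>t. \<Sum>j\<le>i. \<gamma> j t) has_real_derivative - \<theta> i x) (at x within {0..\<beta>})"
      using Suc by simp
    have d2: "(\<gamma> (Suc i) has_real_derivative \<theta> i x - \<theta> (Suc i) x) (at x within {0..\<beta>})"
    proof -
      have "Suc i \<in> {1..I}" using Suc.prems by simp
      from bspec[OF conjunct1[OF conjunct2[OF good[OF x]]] this] show ?thesis by simp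
    qed
    have "((\<lambda>t. (\<Sum>j\<le>i. \<gamma> j t) + \<gamma> (Suc i) t) has_real_derivative
        - \<theta> i x + (\<theta> i x - \<theta> (Suc i) x)) (at x within {0..\<beta>})"
      by (rule DERIV_add[OF d1 d2])
    then show ?case by simp
  qed
  have acPsi: "abs_continuous_on 0 \<beta> (\<lambda>t. \<Sum>j\<le>i. \<gamma> j t)" if "i \<le> I" for i
    using ac\<gamma> that by (intro ac_sum) auto
  have \<theta>nn: "0 \<le> \<theta> j x" if "x \<in> {0..\<beta>} - N0" "j \<le> I + 1" for x j
    using good[OF that(1)] that(2) unfolding in_simplex_def by blast
  have \<theta>sum: "(\<Sum>j\<le>I+1. \<theta> j x) = 1" if "x \<in> {0..\<beta>} - N0" for x
    using good[OF that] unfolding in_simplex_def by blast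
  have \<psi>eq: "\<psi> i t = (\<Sum>j\<le>i. \<gamma> j t)" if "i \<le> I" "t \<in> {0..\<beta>}" for i t
    using \<psi> that unfolding cumulative_occupancy_def by blast
  show ?thesis
  proof (intro allI impI conjI)
    fix i x y assume i: "i \<le> I" and xy: "0 \<le> x" "x < y" "y \<le> \<beta>"
    have x0: "x \<in> {0..\<beta>}" "y \<in> {0..\<beta>}" using xy by auto
    show "(if i = 0 then 0 else \<psi> (i-1) x) \<le> \<psi> i x"
    proof (cases "i = 0")
      case True
      then show ?thesis using sx x0 \<psi>eq[OF i x0(1)] unfolding in_simplex_def by simp
    next
      case False
      then obtain m where m: "i = Suc m" by (cases i) auto
      have "\<psi> i x = \<psi> m x + \<gamma> i x" using \<psi>eq[OF i x0(1)] \<psi>eq[of m x] i m x0 by simp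
      moreover have "0 \<le> \<gamma> i x" using sx x0 i unfolding in_simplex_def by simp
      ultimately show ?thesis using m by simp
    qed
    have mono_i: "- (\<Sum>j\<le>i. \<gamma> j t) \<le> - (\<Sum>j\<le>i. \<gamma> j s)" if "0 \<le> t" "t < s" "s \<le> \<beta>" for t s
    proof (rule ac_mono[where N = N0 and a = t and b = s and f' = "\<theta> i" and f = "\<lambda>t. - (\<Sum>j\<le>i. \<gamma> j t)"])
      show "t \<le> s" using that by simp
      show "abs_continuous_on t s (\<lambda>t. - (\<Sum>j\<le>i. \<gamma> j t))"
        using that by (intro ac_sub[OF ac_neg[OF acPsi[OF i]]]) auto
      show "negligible N0" by (rule negN)
      fix z assume z: "z \<in> {t..s} - N0"
      then have z0: "z \<in> {0..\<beta>} - N0" using that by auto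
      have "((\<lambda>t. - (\<Sum>j\<le>i. \<gamma> j t)) has_real_derivative - (- \<theta> i z)) (at z within {0..\<beta>})"
        by (rule DERIV_minus[OF dPsi[OF z0 i]])
      then have "((\<lambda>t. - (\<Sum>j\<le>i. \<gamma> j t)) has_real_derivative \<theta> i z) (at z within {t..s})"
        using that by (auto intro: DERIV_subset)
      then show "((\<lambda>t. - (\<Sum>j\<le>i. \<gamma> j t)) has_real_derivative \<theta> i z) (at z within {t..s}) \<and> 0 \<le> \<theta> i z"
        using \<theta>nn[OF z0] i by simp
    qed
    have "- (\<Sum>j\<le>i. \<gamma> j x) \<le> - (\<Sum>j\<le>i. \<gamma> j y)" by (rule mono_i[OF xy])
    then show "\<psi> i y \<le> \<psi> i x" using \<psi>eq[OF i x0(1)] \<psi>eq[OF i x0(2)] by linarith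
    define H where "H t = (\<Sum>k\<le>I. \<Sum>j\<le>k. \<gamma> j t) + t" for t
    have "H x \<le> H y"
    proof (rule ac_mono[where N = N0 and f = H and a = x and b = y and f' = "\<lambda>z. (\<Sum>k\<le>I. - \<theta> k z) + 1"])
      show "x \<le> y" using xy by simp
      have A: "abs_continuous_on 0 \<beta> (\<lambda>t. \<Sum>k\<le>I. \<Sum>j\<le>k. \<gamma> j t)"
        by (rule ac_sum) (auto simp: acPsi)
      have B: "abs_continuous_on 0 \<beta> (\<lambda>t. t)" by (rule ac_lip[of 1]) auto
      have "abs_continuous_on 0 \<beta> H" unfolding H_def by (rule ac_add[OF A B])
      then show "abs_continuous_on x y H" by (rule ac_sub) (use xy in auto)
      show "negligible N0" by (rule negN)
      fix z assume z: "z \<in> {x..y} - N0"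
      then have z0: "z \<in> {0..\<beta>} - N0" using xy by auto
      have "(H has_real_derivative (\<Sum>k\<le>I. - \<theta> k z) + 1) (at z within {0..\<beta>})"
        unfolding H_def
      proof (rule DERIV_add[OF DERIV_sum DERIV_ident])
        fix k assume "k \<in> {..I}"
        then show "((\<lambda>t. \<Sum>j\<le>k. \<gamma> j t) has_real_derivative - \<theta> k z) (at z within {0..\<beta>})"
          using dPsi[OF z0, of k] by simp
      qed
      then have "(H has_real_derivative (\<Sum>k\<le>I. - \<theta> k z) + 1) (at z within {x..y})"
        using xy by (auto intro: DERIV_subset)
      moreover have "(\<Sum>k\<le>I. - \<theta> k z) + 1 = \<theta> (I+1) z"
        using \<theta>sum[OF z0] by (simp add: sum_negf)
      ultimately show "(H has_real_derivative (\<Sum>k\<le>I. - \<theta> k z) + 1) (at z within {x..y}) \<and> 0 \<le> (\<Sum>k\<le>I. - \<theta> k z) + 1"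
        using \<theta>nn[OF z0, of "I+1"] by simp
    qed
    moreover have "(\<Sum>k\<le>I. \<psi> k x - \<psi> k y) = (\<Sum>k\<le>I. \<Sum>j\<le>k. \<gamma> j x) - (\<Sum>k\<le>I. \<Sum>j\<le>k. \<gamma> j y)"
    proof -
      have "(\<Sum>k\<le>I. \<psi> k x - \<psi> k y) = (\<Sum>k\<le>I. (\<Sum>j\<le>k. \<gamma> j x) - (\<Sum>j\<le>k. \<gamma> j y))"
        by (rule sum.cong) (use \<psi>eq x0 in auto)
      also have "\<dots> = (\<Sum>k\<le>I. \<Sum>j\<le>k. \<gamma> j x) - (\<Sum>k\<le>I. \<Sum>j\<le>k. \<gamma> j y)"
        by (rule sum_subtractf)
      finally show ?thesis .
    qed
    ultimately show "(\<Sum>k\<le>I. \<psi> k x - \<psi> k y) \<le> y - x" unfolding H_def by linarith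
  qed
qed


lemma backward:
  fixes I :: nat and \<beta> :: real and \<psi> :: "nat \<Rightarrow> real \<Rightarrow> real"
  assumes \<beta>: "\<beta> > 0"
    and rng: "\<forall>i\<le>I. continuous_on {0..\<beta>} (\<psi> i) \<and> \<psi> i ` {0..\<beta>} \<subseteq> {0..1}"
    and C: "\<forall>i\<le>I. \<forall>x y. 0 \<le> x \<longrightarrow> x < y \<longrightarrow> y \<le> \<beta> \<longrightarrow>
       (if i = 0 then 0 else \<psi> (i-1) x) \<le> \<psi> i x \<and>
       \<psi> i y \<le> \<psi> i x \<and>
       (\<Sum>k\<le>I. \<psi> k x - \<psi> k y) \<le> y - x"
  shows "valid_cumulative_path I \<beta> \<psi>"
proof -
  have rng': "0 \<le> \<psi> k t \<and> \<psi> k t \<le> 1" if "k \<le> I" "t \<in> {0..\<beta>}" for k t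
  proof -
    have "\<psi> k t \<in> \<psi> k ` {0..\<beta>}" using that(2) by (rule imageI)
    then have "\<psi> k t \<in> {0..1}" using rng that(1) by blast
    then show ?thesis by simp
  qed
  have dec: "\<psi> k y \<le> \<psi> k x" if "k \<le> I" "0 \<le> x" "x \<le> y" "y \<le> \<beta>" for k x y
  proof (cases "x = y")
    case False
    then show ?thesis using C that by auto
  qed simp
  have sumle: "(\<Sum>k\<le>I. \<psi> k x - \<psi> k y) \<le> y - x" if "0 \<le> x" "x \<le> y" "y \<le> \<beta>" for x y
  proof (cases "x = y")
    case False
    then show ?thesis using C[rule_format, of 0 x y] that by auto
  qed simp
  have lip1: "\<psi> k x - \<psi> k y \<le> y - x" if "k \<le> I" "0 \<le> x" "x \<le> y" "y \<le> \<beta>" for k x y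
  proof -
    have "\<psi> k x - \<psi> k y \<le> (\<Sum>k\<le>I. \<psi> k x - \<psi> k y)"
      by (rule member_le_sum) (use that dec in auto)
    then show ?thesis using sumle[OF that(2-4)] by linarith
  qed
  have lipabs: "\<bar>\<psi> k s - \<psi> k t\<bar> \<le> \<bar>s - t\<bar>" if "k \<le> I" "s \<in> {0..\<beta>}" "t \<in> {0..\<beta>}" for k s t
  proof (cases "s \<le> t")
    case True
    then show ?thesis using lip1[of k s t] dec[of k s t] that by auto
  next
    case False
    then show ?thesis using lip1[of k t s] dec[of k t s] that by auto
  qed
  have ordlt: "\<psi> (i-1) t \<le> \<psi> i t" if "1 \<le> i" "i \<le> I" "0 \<le> t" "t < \<beta>" for i t
    using C[rule_format, of i t \<beta>] that by auto
  have ord: "\<psi> (i-1) t \<le> \<psi> i t" if i: "1 \<le> i" "i \<le> I" and t: "t \<in> {0..\<beta>}" for i t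
  proof (cases "t < \<beta>")
    case True
    then show ?thesis using ordlt i t by auto
  next
    case False
    then have t\<beta>: "t = \<beta>" using t by auto
    show ?thesis
    proof (rule field_le_epsilon)
      fix e :: real assume e: "0 < e"
      define x' where "x' = \<beta> - min e \<beta>"
      have x': "0 \<le> x'" "x' < \<beta>" "\<beta> - x' \<le> e" using e \<beta> by (auto simp: x'_def)
      have "\<psi> (i-1) \<beta> \<le> \<psi> (i-1) x'" using dec[of "i-1" x' \<beta>] i x' by auto
      also have "\<dots> \<le> \<psi> i x'" using ordlt[OF i x'(1,2)] .
      also have "\<dots> \<le> \<psi> i \<beta> + (\<beta> - x')" using lip1[of i x' \<beta>] i x' by auto
      also have "\<dots> \<le> \<psi> i \<beta> + e" using x' by simp
      finally show "\<psi> (i-1) t \<le> \<psi> i t + e" using t\<beta> by simp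
    qed
  qed
  define \<gamma> where "\<gamma> j t = (if j = 0 then \<psi> 0 t else if j \<le> I then \<psi> j t - \<psi> (j-1) t
      else if j = I+1 then 1 - \<psi> I t else 0)" for j t
  have \<gamma>0: "\<gamma> 0 = \<psi> 0" by (auto simp: \<gamma>_def fun_eq_iff)
  have \<gamma>j: "\<gamma> j = (\<lambda>t. \<psi> j t - \<psi> (j-1) t)" if "1 \<le> j" "j \<le> I" for j
    using that by (auto simp: \<gamma>_def fun_eq_iff)
  have \<gamma>I: "\<gamma> (Suc I) = (\<lambda>t. 1 - \<psi> I t)" by (auto simp: \<gamma>_def fun_eq_iff)
  have cum: "(\<Sum>j\<le>i. \<gamma> j t) = \<psi> i t" if "i \<le> I" for i t
    using that
  proof (induction i)
    case 0
    then show ?case by (simp add: \<gamma>0)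
  next
    case (Suc i)
    then have "(\<Sum>j\<le>Suc i. \<gamma> j t) = \<psi> i t + \<gamma> (Suc i) t" by simp
    also have "\<gamma> (Suc i) t = \<psi> (Suc i) t - \<psi> i t" using \<gamma>j[of "Suc i"] Suc.prems by simp
    finally show ?case by simp
  qed
  have ac: "abs_continuous_on 0 \<beta> (\<gamma> j)" if "j \<le> I + 1" for j
  proof (rule ac_lip[of 2])
    fix s t assume st: "s \<in> {0..\<beta>}" "t \<in> {0..\<beta>}"
    show "\<bar>\<gamma> j s - \<gamma> j t\<bar> \<le> 2 * \<bar>s - t\<bar>"
    proof (cases "j = 0")
      case True
      then have "\<bar>\<gamma> j s - \<gamma> j t\<bar> = \<bar>\<psi> 0 s - \<psi> 0 t\<bar>" by (simp add: \<gamma>0)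
      moreover have "\<bar>\<psi> 0 s - \<psi> 0 t\<bar> \<le> \<bar>s - t\<bar>" by (rule lipabs) (use st in auto)
      ultimately show ?thesis using abs_ge_zero[of "s - t"] by (smt (verit))
    next
      case False
      show ?thesis
      proof (cases "j \<le> I")
        case True
        have "\<bar>\<gamma> j s - \<gamma> j t\<bar> \<le> \<bar>\<psi> j s - \<psi> j t\<bar> + \<bar>\<psi> (j-1) s - \<psi> (j-1) t\<bar>"
          using \<gamma>j[of j] True False by simp
        moreover have "\<bar>\<psi> j s - \<psi> j t\<bar> \<le> \<bar>s - t\<bar>" by (rule lipabs) (use st True in auto)
        moreover have "\<bar>\<psi> (j-1) s - \<psi> (j-1) t\<bar> \<le> \<bar>s - t\<bar>" by (rule lipabs) (use st True in auto)
        ultimately show ?thesis by (smt (verit))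
      next
        case False
        then have "j = I + 1" using that by simp
        then have "\<bar>\<gamma> j s - \<gamma> j t\<bar> = \<bar>\<psi> I s - \<psi> I t\<bar>" by (simp add: \<gamma>I abs_minus_commute)
        moreover have "\<bar>\<psi> I s - \<psi> I t\<bar> \<le> \<bar>s - t\<bar>" by (rule lipabs) (use st in auto)
        ultimately show ?thesis using abs_ge_zero[of "s - t"] by (smt (verit))
      qed
    qed
  qed simp
  have sx: "in_simplex I (\<lambda>j. \<gamma> j x)" if x: "x \<in> {0..\<beta>}" for x
    unfolding in_simplex_def
  proof (intro conjI allI impI)
    fix j assume j: "j \<le> I + 1"
    show "0 \<le> \<gamma> j x"
    proof (cases "j = 0")
      case True then show ?thesis using rng'[of 0 x] x by (simp add: \<gamma>0)
    next
      case False
      show ?thesis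
      proof (cases "j \<le> I")
        case True then show ?thesis using ord[of j x] x False \<gamma>j[of j] by simp
      next
        case False
        then have "j = I + 1" using j by simp
        then show ?thesis using rng'[of I x] x by (simp add: \<gamma>I)
      qed
    qed
  next
    have "(\<Sum>j\<le>I+1. \<gamma> j x) = (\<Sum>j\<le>I. \<gamma> j x) + \<gamma> (I+1) x" by simp
    also have "\<dots> = 1" using cum[of I x] by (simp add: \<gamma>I)
    finally show "(\<Sum>j\<le>I+1. \<gamma> j x) = 1" .
  qed
  define G where "G k t = \<psi> k (max 0 (min \<beta> t))" for k t
  have Gmono: "mono (\<lambda>t. - G k t)" if "k \<le> I" for k
  proof (rule monoI)
    fix s t :: real assume "s \<le> t"
    then have "max 0 (min \<beta> s) \<le> max 0 (min \<beta> t)" by simp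
    then show "- G k s \<le> - G k t" unfolding G_def using dec[of k] that \<beta> by auto
  qed
  have Glip: "\<bar>(- G k s) - (- G k t)\<bar> \<le> 1 * \<bar>s - t\<bar>" if "k \<le> I" for k s t
  proof -
    have "\<bar>(- G k s) - (- G k t)\<bar> = \<bar>\<psi> k (max 0 (min \<beta> s)) - \<psi> k (max 0 (min \<beta> t))\<bar>"
      unfolding G_def by linarith
    also have "\<dots> \<le> \<bar>max 0 (min \<beta> s) - max 0 (min \<beta> t)\<bar>" using lipabs[OF that] \<beta> by simp
    also have "\<dots> \<le> \<bar>s - t\<bar>" by linarith
    finally show ?thesis by simp
  qed
  have "\<forall>k. \<exists>Z. k \<le> I \<longrightarrow> negligible Z \<and> (\<forall>x\<in>{0<..<\<beta>} - Z. \<exists>D. ((\<lambda>t. - G k t) has_real_derivative D) (at x))"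
    using mono_lip_diff_ae[OF Gmono Glip] by metis
  then obtain Z where Z: "\<And>k. k \<le> I \<Longrightarrow> negligible (Z k)"
    "\<And>k x. k \<le> I \<Longrightarrow> x \<in> {0<..<\<beta>} - Z k \<Longrightarrow> \<exists>D. ((\<lambda>t. - G k t) has_real_derivative D) (at x)"
    by metis
  define Zt where "Zt = (\<Union>k\<le>I. Z k) \<union> {0, \<beta>}"
  have negZt: "negligible Zt" unfolding Zt_def
  proof (rule negligible_Un)
    show "negligible (\<Union>k\<le>I. Z k)" by (rule negligible_countable_Union) (auto intro: Z(1))
    show "negligible {0, \<beta>}" by (rule negligible_finite) simp
  qed
  define D where "D k x = deriv (G k) x" for k x
  have dG: "(G k has_real_derivative D k x) (at x)" if k: "k \<le> I" and x: "x \<in> {0..\<beta>} - Zt" for k x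
  proof -
    have "x \<in> {0<..<\<beta>} - Z k" using x k unfolding Zt_def by auto
    then obtain D' where "((\<lambda>t. - G k t) has_real_derivative D') (at x)" using Z(2)[OF k] by blast
    then have "((\<lambda>t. - (- G k t)) has_real_derivative - D') (at x)" by (rule DERIV_minus)
    then have d: "(G k has_real_derivative - D') (at x)" by simp
    then have "D k x = - D'" unfolding D_def by (rule DERIV_imp_deriv)
    then show ?thesis using d by simp
  qed
  have x0b: "0 < x" "x < \<beta>" if "x \<in> {0..\<beta>} - Zt" for x
    using that unfolding Zt_def by auto
  have d\<psi>: "(\<psi> k has_real_derivative D k x) (at x within {0..\<beta>})" if k: "k \<le> I" and x: "x \<in> {0..\<beta>} - Zt" for k x
  proof (rule has_field_derivative_transform_within[where d = 1])
    show "(G k has_real_derivative D k x) (at x within {0..\<beta>})"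
      using dG[OF k x] by (rule has_field_derivative_at_within)
    show "x \<in> {0..\<beta>}" using x by simp
    show "G k t = \<psi> k t" if "t \<in> {0..\<beta>}" for t using that unfolding G_def by simp
  qed simp
  define \<theta> where "\<theta> j x = (if j \<le> I then - D j x else if j = I + 1 then 1 + (\<Sum>k\<le>I. D k x) else 0)" for j x
  have Dle: "D k x \<le> 0" if k: "k \<le> I" and x: "x \<in> {0..\<beta>} - Zt" for k x
  proof (rule ccontr)
    assume "\<not> D k x \<le> 0"
    then have "0 < D k x" by simp
    then obtain d where d: "d > 0" "\<forall>h>0. h < d \<longrightarrow> G k x < G k (x + h)"
      using DERIV_pos_inc_right[OF dG[OF k x]] by blast
    obtain m0 where m: "m0 \<le> \<beta> - x" "m0 \<le> d" "m0 > 0"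
      using d x0b[OF x] by (intro that[of "min d (\<beta> - x)"]) auto
    define h where "h = m0 / 2"
    have h1: "h > 0" using m unfolding h_def by linarith
    have h2: "h < d" using m d unfolding h_def by linarith
    have h3: "x + h \<le> \<beta>" using m unfolding h_def by linarith
    note h = h1 h2 h3
    have "G k x < G k (x + h)" using d h by blast
    moreover have "G k (x + h) = \<psi> k (x + h)" "G k x = \<psi> k x" using h x0b[OF x] by (auto simp: G_def)
    moreover have "\<psi> k (x + h) \<le> \<psi> k x" using dec[of k x "x + h"] k h x0b[OF x] by auto
    ultimately show False by simp
  qed
  have Dsum: "0 \<le> 1 + (\<Sum>k\<le>I. D k x)" if x: "x \<in> {0..\<beta>} - Zt" for x
  proof (rule ccontr)
    assume "\<not> 0 \<le> 1 + (\<Sum>k\<le>I. D k x)"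
    then have neg: "(\<Sum>k\<le>I. D k x) + 1 < 0" by simp
    define Hf where "Hf t = (\<Sum>k\<le>I. G k t) + t" for t
    have "(Hf has_real_derivative (\<Sum>k\<le>I. D k x) + 1) (at x)"
      unfolding Hf_def
    proof (rule DERIV_add[OF DERIV_sum DERIV_ident])
      fix k assume "k \<in> {..I}"
      then show "((\<lambda>t. G k t) has_real_derivative D k x) (at x)" using dG[OF _ x, of k] by simp
    qed
    then obtain d where d: "d > 0" "\<forall>h>0. h < d \<longrightarrow> Hf (x + h) < Hf x"
      using DERIV_neg_dec_right neg by blast
    obtain m0 where m: "m0 \<le> \<beta> - x" "m0 \<le> d" "m0 > 0"
      using d x0b[OF x] by (intro that[of "min d (\<beta> - x)"]) auto
    define h where "h = m0 / 2"
    have h1: "h > 0" using m unfolding h_def by linarith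
    have h2: "h < d" using m d unfolding h_def by linarith
    have h3: "x + h \<le> \<beta>" using m unfolding h_def by linarith
    note h = h1 h2 h3
    have "Hf (x + h) < Hf x" using d h by blast
    moreover have "Hf (x + h) = (\<Sum>k\<le>I. \<psi> k (x + h)) + (x + h)" "Hf x = (\<Sum>k\<le>I. \<psi> k x) + x"
      using h x0b[OF x] by (auto simp: Hf_def G_def)
    moreover have "(\<Sum>k\<le>I. \<psi> k x - \<psi> k (x + h)) \<le> (x + h) - x"
      using sumle[of x "x + h"] h x0b[OF x] by auto
    moreover have "(\<Sum>k\<le>I. \<psi> k x - \<psi> k (x + h)) = (\<Sum>k\<le>I. \<psi> k x) - (\<Sum>k\<le>I. \<psi> k (x + h))"
      by (rule sum_subtractf)
    ultimately show False by linarith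
  qed
  have goodx: "(\<gamma> 0 has_real_derivative - \<theta> 0 x) (at x within {0..\<beta>}) \<and>
          (\<forall>j\<in>{1..I}. (\<gamma> j has_real_derivative \<theta> (j-1) x - \<theta> j x) (at x within {0..\<beta>})) \<and>
          (\<gamma> (I+1) has_real_derivative \<theta> I x) (at x within {0..\<beta>}) \<and>
          in_simplex I (\<lambda>j. \<theta> j x)" if x: "x \<in> {0..\<beta>} - Zt" for x
  proof (intro conjI ballI)
    show "(\<gamma> 0 has_real_derivative - \<theta> 0 x) (at x within {0..\<beta>})"
      using d\<psi>[of 0 x] x by (simp add: \<gamma>0 \<theta>_def)
    show "(\<gamma> (I+1) has_real_derivative \<theta> I x) (at x within {0..\<beta>})"
    proof -
      have "((\<lambda>t. 1 - \<psi> I t) has_real_derivative 0 - D I x) (at x within {0..\<beta>})"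
        by (rule DERIV_diff[OF DERIV_const d\<psi>[OF _ x]]) simp
      then show ?thesis by (simp add: \<gamma>I \<theta>_def)
    qed
    fix j assume j: "j \<in> {1..I}"
    have "((\<lambda>t. \<psi> j t - \<psi> (j-1) t) has_real_derivative D j x - D (j-1) x) (at x within {0..\<beta>})"
      by (rule DERIV_diff[OF d\<psi>[OF _ x] d\<psi>[OF _ x]]) (use j in auto)
    moreover have "\<theta> (j-1) x = - D (j-1) x" "\<theta> j x = - D j x" using j by (auto simp: \<theta>_def)
    moreover have "\<gamma> j = (\<lambda>t. \<psi> j t - \<psi> (j-1) t)" using j by (intro \<gamma>j) auto
    ultimately show "(\<gamma> j has_real_derivative \<theta> (j-1) x - \<theta> j x) (at x within {0..\<beta>})"
      by simp
  next
    show "in_simplex I (\<lambda>j. \<theta> j x)"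
      unfolding in_simplex_def
    proof (intro conjI allI impI)
      fix j assume j: "j \<le> I + 1"
      show "0 \<le> \<theta> j x"
      proof (cases "j \<le> I")
        case True then show ?thesis using Dle[OF True x] by (simp add: \<theta>_def)
      next
        case False
        then have "j = I + 1" using j by simp
        then show ?thesis using Dsum[OF x] by (simp add: \<theta>_def)
      qed
    next
      have "(\<Sum>j\<le>I+1. \<theta> j x) = (\<Sum>j\<le>I. \<theta> j x) + \<theta> (I+1) x" by simp
      also have "(\<Sum>j\<le>I. \<theta> j x) = (\<Sum>j\<le>I. - D j x)" by (rule sum.cong) (auto simp: \<theta>_def)
      also have "\<theta> (I+1) x = 1 + (\<Sum>k\<le>I. D k x)" by (simp add: \<theta>_def)
      finally show "(\<Sum>j\<le>I+1. \<theta> j x) = 1" by (simp add: sum_negf)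
    qed
  qed
  have AEZ: "AE x in lborel. x \<notin> Zt"
  proof -
    have "Zt \<in> null_sets lebesgue" using negZt negligible_iff_null_sets by blast
    then have "AE x in lebesgue. x \<notin> Zt" by (rule AE_not_in)
    then show ?thesis by (simp add: AE_completion_iff)
  qed
  have AEg: "AE x in lborel. x \<in> {0..\<beta>} \<longrightarrow>
          (\<gamma> 0 has_real_derivative - \<theta> 0 x) (at x within {0..\<beta>}) \<and>
          (\<forall>j\<in>{1..I}. (\<gamma> j has_real_derivative \<theta> (j-1) x - \<theta> j x) (at x within {0..\<beta>})) \<and>
          (\<gamma> (I+1) has_real_derivative \<theta> I x) (at x within {0..\<beta>}) \<and>
          in_simplex I (\<lambda>j. \<theta> j x)"
    apply (rule AE_mp[OF AEZ], rule AE_I2)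
    using goodx by blast
  have "valid_occupancy I \<beta> \<gamma>"
    unfolding valid_occupancy_def using ac sx AEg by blast
  moreover have "\<forall>i\<le>I. \<forall>x\<in>{0..\<beta>}. \<psi> i x = cumulative_occupancy \<gamma> i x"
    using cum unfolding cumulative_occupancy_def by simp
  ultimately show ?thesis unfolding valid_cumulative_path_def by blast
qed

theorem lemma2p1:
  fixes I :: nat and \<beta> :: real and \<psi> :: "nat \<Rightarrow> real \<Rightarrow> real"
  assumes "\<beta> > 0"
    and "\<forall>i\<le>I. continuous_on {0..\<beta>} (\<psi> i) \<and> \<psi> i ` {0..\<beta>} \<subseteq> {0..1}"
  shows "valid_cumulative_path I \<beta> \<psi> \<longleftrightarrow>
    (\<forall>i\<le>I. \<forall>x y. 0 \<le> x \<longrightarrow> x < y \<longrightarrow> y \<le> \<beta> \<longrightarrow>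
       (if i = 0 then 0 else \<psi> (i-1) x) \<le> \<psi> i x \<and>
       \<psi> i y \<le> \<psi> i x \<and>
       (\<Sum>k\<le>I. \<psi> k x - \<psi> k y) \<le> y - x)"
proof
  assume "valid_cumulative_path I \<beta> \<psi>"
  then obtain \<gamma> where "valid_occupancy I \<beta> \<gamma>" "\<forall>i\<le>I. \<forall>x\<in>{0..\<beta>}. \<psi> i x = cumulative_occupancy \<gamma> i x"
    unfolding valid_cumulative_path_def by blast
  then show "\<forall>i\<le>I. \<forall>x y. 0 \<le> x \<longrightarrow> x < y \<longrightarrow> y \<le> \<beta> \<longrightarrow>
       (if i = 0 then 0 else \<psi> (i-1) x) \<le> \<psi> i x \<and>
       \<psi> i y \<le> \<psi> i x \<and>
       (\<Sum>k\<le>I. \<psi> k x - \<psi> k y) \<le> y - x"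
    using forward assms(1) by blast
next
  assume "\<forall>i\<le>I. \<forall>x y. 0 \<le> x \<longrightarrow> x < y \<longrightarrow> y \<le> \<beta> \<longrightarrow>
       (if i = 0 then 0 else \<psi> (i-1) x) \<le> \<psi> i x \<and>
       \<psi> i y \<le> \<psi> i x \<and>
       (\<Sum>k\<le>I. \<psi> k x - \<psi> k y) \<le> y - x"
  then show "valid_cumulative_path I \<beta> \<psi>" using backward assms by blast
qed

end
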